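(* Let $d\ge2$. There are constants (depending only on the indicated quantities) such that for all $n\ge0$ and vertices: (i) $p^{\mathbb G_o}_n(\mathtt y_0,\mathtt y)\le e^{-c(d)n}$ for all $\mathtt y_0,\mathtt y\in\mathbb G_o$; (ii) $p^{\mathbb G_\lozenge}_n(\mathtt y_0,\mathtt y)\le n^{-3/5}+c(d,|\mathtt y|)\exp\{-c'(d,|\mathtt y|)n^{c(d)}\}$ for all $\mathtt y_0,\mathtt y\in\mathbb G_\lozenge$, $n\ge1$; (iii) $p^{G_N}_n(y_0,y)\le c\,e^{-c(d)d(y_0,y)}1_{\{n\le N^3\}}+c(d)\big(d^{-N}+n^{-3/5}\big)1_{\{n>N^3\}}$ for all $N$ and $y_0,y\in G_N$.
   Context: $p^{\mathcal G}_n$ denotes the $n$-step transition probability of the random walk on $\mathcal G$ (transition probabilities $w_{y,y'}/w_y$; here all edges have weight $1/2$). $\mathbb G_o$ is the infinite $(d+1)$-regular tree with root $o$; $G_N$ is the ball of radius $N$ around $o$ in $\mathbb G_o$ (induced edges), $d(\cdot,\cdot)$ the graph distance. $\mathbb G_\lozenge$ has vertices $(k;s)$ with $k\ge0$ and $s=(s_1,s_2,\dots)\in\{1,\dots,d\}^{\mathbb N}$ having finitely many terms $\ne1$, and an edge between $(k;s)$ and $(k+1;s')$ whenever $s_{n+1}=s'_n$ for all $n\ge1$; the height of $(k;s)$ is $|(k;s)|=k$. *)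

theory Defs
  imports Complex_Main
begin

definition nbrs :: "('a \<Rightarrow> 'a \<Rightarrow> bool) \<Rightarrow> 'a \<Rightarrow> 'a set" where
  "nbrs E x = {z. E x z}"

definition edge_weight :: "('a \<Rightarrow> 'a \<Rightarrow> bool) \<Rightarrow> 'a \<Rightarrow> 'a \<Rightarrow> real" where
  "edge_weight E x z = (if E x z then 1/2 else 0)"

definition vertex_weight :: "('a \<Rightarrow> 'a \<Rightarrow> bool) \<Rightarrow> 'a \<Rightarrow> real" where
  "vertex_weight E x = (\<Sum>z\<in>nbrs E x. edge_weight E x z)"

definition trans_prob :: "('a \<Rightarrow> 'a \<Rightarrow> bool) \<Rightarrow> 'a \<Rightarrow> 'a \<Rightarrow> real" where
  "trans_prob E x z = edge_weight E x z / vertex_weight E x"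

fun rw_prob :: "('a \<Rightarrow> 'a \<Rightarrow> bool) \<Rightarrow> nat \<Rightarrow> 'a \<Rightarrow> 'a \<Rightarrow> real" where
  "rw_prob E 0 x y = (if x = y then 1 else 0)"
| "rw_prob E (Suc n) x y = (\<Sum>z\<in>nbrs E x. trans_prob E x z * rw_prob E n z y)"

definition graph_dist :: "('a \<Rightarrow> 'a \<Rightarrow> bool) \<Rightarrow> 'a \<Rightarrow> 'a \<Rightarrow> nat" where
  "graph_dist E x y = (LEAST k. (E ^^ k) x y)"

text \<open>Vertices are lists of digits: [] is the root o; a#v is a child of v.
  The last digit (the child of the root) ranges over {0..d} (d+1 children of the root),
  all other digits over {0..<d} (d children of every non-root vertex).\<close>

definition tree_vert :: "nat \<Rightarrow> nat list \<Rightarrow> bool" where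
  "tree_vert d v \<longleftrightarrow> v = [] \<or> (last v \<le> d \<and> (\<forall>x\<in>set (butlast v). x < d))"

definition tree_edge :: "nat \<Rightarrow> nat list \<Rightarrow> nat list \<Rightarrow> bool" where
  "tree_edge d u v \<longleftrightarrow> tree_vert d u \<and> tree_vert d v \<and>
     ((\<exists>a. u = a # v) \<or> (\<exists>a. v = a # u))"

text \<open>G_N: the ball of radius N around o (= []) with induced edges.
  Since G_o is a tree, d(o,v) = length v.\<close>
definition ball_vert :: "nat \<Rightarrow> nat \<Rightarrow> nat list \<Rightarrow> bool" where
  "ball_vert d N v \<longleftrightarrow> tree_vert d v \<and> graph_dist (tree_edge d) [] v \<le> N"

definition ball_edge :: "nat \<Rightarrow> nat \<Rightarrow> nat list \<Rightarrow> nat list \<Rightarrow> bool" where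
  "ball_edge d N u v \<longleftrightarrow> tree_edge d u v \<and> ball_vert d N u \<and> ball_vert d N v"

text \<open>Vertices (k; s), s = (s_1, s_2, ...) encoded as a function with s i = s_{i+1}.\<close>
definition dia_vert :: "nat \<Rightarrow> nat \<times> (nat \<Rightarrow> nat) \<Rightarrow> bool" where
  "dia_vert d y \<longleftrightarrow> (\<forall>i. 1 \<le> snd y i \<and> snd y i \<le> d) \<and> finite {i. snd y i \<noteq> 1}"

definition dia_up :: "nat \<times> (nat \<Rightarrow> nat) \<Rightarrow> nat \<times> (nat \<Rightarrow> nat) \<Rightarrow> bool" where
  "dia_up y y' \<longleftrightarrow> fst y' = Suc (fst y) \<and> (\<forall>n. snd y (Suc n) = snd y' n)"

definition dia_edge :: "nat \<Rightarrow> nat \<times> (nat \<Rightarrow> nat) \<Rightarrow> nat \<times> (nat \<Rightarrow> nat) \<Rightarrow> bool" where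
  "dia_edge d y y' \<longleftrightarrow> dia_vert d y \<and> dia_vert d y' \<and> (dia_up y y' \<or> dia_up y' y)"

end

theory Submission
  imports Defs "HOL-Real_Asymp.Real_Asymp"
begin

section \<open>Generic random walk facts\<close>

lemma vertex_weight_eq: "vertex_weight E x = real (card (nbrs E x)) / 2"
proof -
  have "vertex_weight E x = (\<Sum>z\<in>nbrs E x. 1/2)"
    unfolding vertex_weight_def by (rule sum.cong) (auto simp: edge_weight_def nbrs_def)
  then show ?thesis by simp
qed

lemma trans_prob_eq: "trans_prob E x z = (if E x z then 1 / real (card (nbrs E x)) else 0)"
  unfolding trans_prob_def vertex_weight_eq edge_weight_def by auto

lemma trans_prob_nonneg: "0 \<le> trans_prob E x z"
  by (simp add: trans_prob_eq)

lemma sum_trans_le1: "(\<Sum>z\<in>nbrs E x. trans_prob E x z) \<le> 1"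
proof -
  have "(\<Sum>z\<in>nbrs E x. trans_prob E x z) = (\<Sum>z\<in>nbrs E x. 1 / real (card (nbrs E x)))"
    by (rule sum.cong) (auto simp: trans_prob_eq nbrs_def)
  also have "\<dots> = real (card (nbrs E x)) * (1 / real (card (nbrs E x)))" by simp
  also have "\<dots> \<le> 1" by (cases "card (nbrs E x) = 0") auto
  finally show ?thesis .
qed

lemma sum_trans_eq1: "finite (nbrs E x) \<Longrightarrow> nbrs E x \<noteq> {} \<Longrightarrow> (\<Sum>z\<in>nbrs E x. trans_prob E x z) = 1"
proof -
  assume a: "finite (nbrs E x)" "nbrs E x \<noteq> {}"
  have "(\<Sum>z\<in>nbrs E x. trans_prob E x z) = (\<Sum>z\<in>nbrs E x. 1 / real (card (nbrs E x)))"
    by (rule sum.cong) (auto simp: trans_prob_eq nbrs_def)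
  also have "\<dots> = 1" using a by simp
  finally show ?thesis .
qed

lemma rw_nonneg: "0 \<le> rw_prob E n x y"
  by (induction n arbitrary: x) (auto intro!: sum_nonneg mult_nonneg_nonneg trans_prob_nonneg)

lemma sum_rw_le1: "finite W \<Longrightarrow> (\<Sum>w\<in>W. rw_prob E n x w) \<le> 1"
proof (induction n arbitrary: x)
  case 0
  then show ?case by (simp add: sum.delta)
next
  case (Suc n)
  have "(\<Sum>w\<in>W. rw_prob E (Suc n) x w)
      = (\<Sum>z\<in>nbrs E x. trans_prob E x z * (\<Sum>w\<in>W. rw_prob E n z w))"
    by (simp add: sum_distrib_left sum.swap[of _ W])
  also have "\<dots> \<le> (\<Sum>z\<in>nbrs E x. trans_prob E x z * 1)"
    by (intro sum_mono mult_left_mono Suc trans_prob_nonneg)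
  also have "\<dots> \<le> 1" using sum_trans_le1 by simp
  finally show ?case .
qed

lemma rw_le1: "rw_prob E n x y \<le> 1"
  using sum_rw_le1[of "{y}" E n x] by simp

lemma rw_auto:
  assumes inv: "\<And>a. \<sigma> (\<sigma> a) = a" and E: "\<And>a b. E (\<sigma> a) (\<sigma> b) = E a b"
  shows "rw_prob E n (\<sigma> x) (\<sigma> y) = rw_prob E n x y"
proof (induction n arbitrary: x)
  case 0
  then show ?case by (metis inv rw_prob.simps(1))
next
  case (Suc n)
  have inj: "inj \<sigma>" by (metis inv injI)
  have N: "nbrs E (\<sigma> x) = \<sigma> ` nbrs E x"
    unfolding nbrs_def
    by (auto simp: image_iff) (metis E inv)+
  have C: "card (nbrs E (\<sigma> x)) = card (nbrs E x)"
    unfolding N by (rule card_image) (use inj in \<open>auto simp: inj_on_def\<close>)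
  have "rw_prob E (Suc n) (\<sigma> x) (\<sigma> y) = (\<Sum>z\<in>\<sigma> ` nbrs E x. trans_prob E (\<sigma> x) z * rw_prob E n z (\<sigma> y))"
    by (simp add: N)
  also have "\<dots> = (\<Sum>z\<in>nbrs E x. trans_prob E (\<sigma> x) (\<sigma> z) * rw_prob E n (\<sigma> z) (\<sigma> y))"
    by (subst sum.reindex) (use inj in \<open>auto simp: inj_on_def\<close>)
  also have "\<dots> = (\<Sum>z\<in>nbrs E x. trans_prob E x z * rw_prob E n z y)"
    by (rule sum.cong) (auto simp: Suc trans_prob_eq C E)
  finally show ?case by simp
qed

fun av :: "('a \<Rightarrow> 'a \<Rightarrow> bool) \<Rightarrow> 'a set \<Rightarrow> nat \<Rightarrow> 'a \<Rightarrow> real" where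
  "av E R 0 x = (if x \<in> R then 0 else 1)"
| "av E R (Suc n) x = (if x \<in> R then 0 else (\<Sum>z\<in>nbrs E x. trans_prob E x z * av E R n z))"

lemma av_nonneg: "0 \<le> av E R n x"
  by (induction n arbitrary: x) (auto intro!: sum_nonneg mult_nonneg_nonneg trans_prob_nonneg)

lemma av_R: "x \<in> R \<Longrightarrow> av E R n x = 0"
  by (cases n) auto

lemma av_le_M:
  assumes "\<And>x. av E R m x \<le> M" "0 \<le> M"
  shows "av E R (m + j) x \<le> M"
proof (induction j arbitrary: x)
  case 0 then show ?case using assms by simp
next
  case (Suc j)
  have "(\<Sum>z\<in>nbrs E x. trans_prob E x z * av E R (m + j) z) \<le> (\<Sum>z\<in>nbrs E x. trans_prob E x z * M)"
    by (intro sum_mono mult_left_mono Suc trans_prob_nonneg)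
  also have "\<dots> = M * (\<Sum>z\<in>nbrs E x. trans_prob E x z)" by (simp add: sum_distrib_left mult.commute)
  also have "\<dots> \<le> M" by (rule mult_left_le[OF sum_trans_le1 assms(2)])
  finally show ?case using assms(2) by simp
qed

lemma av_le1: "av E R n x \<le> 1"
  using av_le_M[of E R 0 1 n x] by auto

lemma av_le_M_V:
  assumes V: "\<And>x z. x \<in> V \<Longrightarrow> E x z \<Longrightarrow> z \<in> V"
    and "\<And>x. x \<in> V \<Longrightarrow> av E R m x \<le> M" "0 \<le> M"
  shows "x \<in> V \<Longrightarrow> av E R (m + j) x \<le> M"
proof (induction j arbitrary: x)
  case 0 then show ?case using assms by simp
next
  case (Suc j)
  have "(\<Sum>z\<in>nbrs E x. trans_prob E x z * av E R (m + j) z) \<le> (\<Sum>z\<in>nbrs E x. trans_prob E x z * M)"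
    by (intro sum_mono mult_left_mono Suc trans_prob_nonneg) (use V Suc.prems in \<open>auto simp: nbrs_def\<close>)
  also have "\<dots> = M * (\<Sum>z\<in>nbrs E x. trans_prob E x z)" by (simp add: sum_distrib_left mult.commute)
  also have "\<dots> \<le> M" by (rule mult_left_le[OF sum_trans_le1 assms(3)])
  finally show ?case using assms(3) by simp
qed

lemma hit_decomp:
  assumes step: "\<And>t x. F (Suc t) x \<le> (\<Sum>z\<in>nbrs E x. trans_prob E x z * F t z)"
    and le1: "\<And>t x. F t x \<le> 1"
    and inR: "\<And>v t. v \<in> R \<Longrightarrow> F t v \<le> c" and c: "0 \<le> c"
  shows "F k x \<le> c + av E R k x"
proof (induction k arbitrary: x)
  case 0
  then show ?case using inR le1 c by (cases "x \<in> R") (auto simp: add_increasing)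
next
  case (Suc k)
  show ?case
  proof (cases "x \<in> R")
    case True then show ?thesis using inR by simp
  next
    case False
    have "F (Suc k) x \<le> (\<Sum>z\<in>nbrs E x. trans_prob E x z * (c + av E R k z))"
      using step[of k x] by (meson Suc mult_left_mono order_trans sum_mono trans_prob_nonneg)
    also have "\<dots> = c * (\<Sum>z\<in>nbrs E x. trans_prob E x z) + (\<Sum>z\<in>nbrs E x. trans_prob E x z * av E R k z)"
      by (simp add: distrib_left sum.distrib sum_distrib_left mult.commute)
    also have "\<dots> \<le> c + av E R (Suc k) x"
      using False mult_left_le[OF sum_trans_le1[of E x] c] by simp
    finally show ?thesis .
  qed
qed

lemma region_bound:
  assumes inR: "\<And>v t. v \<in> R \<Longrightarrow> rw_prob E t v y \<le> c" and c: "0 \<le> c"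
    and yO: "y \<notin> \<Omega>" and cl: "\<And>v z. v \<in> \<Omega> \<Longrightarrow> E v z \<Longrightarrow> z \<in> \<Omega> \<or> z \<in> R"
  shows "x \<in> \<Omega> \<Longrightarrow> rw_prob E t x y \<le> c"
proof (induction t arbitrary: x)
  case 0 then show ?case using yO c by auto
next
  case (Suc t)
  have "rw_prob E (Suc t) x y \<le> (\<Sum>z\<in>nbrs E x. trans_prob E x z * c)"
    unfolding rw_prob.simps
  proof (intro sum_mono mult_left_mono trans_prob_nonneg)
    fix z assume "z \<in> nbrs E x"
    then have "z \<in> \<Omega> \<or> z \<in> R" using cl Suc.prems by (auto simp: nbrs_def)
    then show "rw_prob E t z y \<le> c" using Suc.IH inR by blast
  qed
  also have "\<dots> = c * (\<Sum>z\<in>nbrs E x. trans_prob E x z)" by (simp add: sum_distrib_left mult.commute)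
  also have "\<dots> \<le> c" by (rule mult_left_le[OF sum_trans_le1 c])
  finally show ?case .
qed

lemma av_climb:
  assumes V: "\<And>x z. x \<in> V \<Longrightarrow> E x z \<Longrightarrow> z \<in> V"
    and prog: "\<And>x. x \<in> V \<Longrightarrow> lev x > 0 \<Longrightarrow> \<exists>u. E x u \<and> lev u = lev x - 1 \<and> p \<le> trans_prob E x u"
    and R: "\<And>x. x \<in> V \<Longrightarrow> x \<in> R \<longleftrightarrow> lev x = 0"
    and p: "0 \<le> p" and p1: "p \<le> 1"
    and M: "\<And>x. x \<in> V \<Longrightarrow> av E R m x \<le> M" and M0: "0 \<le> M"
  shows "x \<in> V \<Longrightarrow> lev x \<le> j \<Longrightarrow> av E R (m + j) x \<le> M * (1 - p ^ lev x)"
proof (induction j arbitrary: x)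
  case 0 then show ?case using R av_R by fastforce
next
  case (Suc j)
  show ?case
  proof (cases "lev x = 0")
    case True then show ?thesis using R Suc.prems av_R by fastforce
  next
    case False
    then have xR: "x \<notin> R" using R Suc.prems by auto
    obtain u where u: "E x u" "lev u = lev x - 1" "p \<le> trans_prob E x u"
      using prog[of x] Suc.prems False by auto
    show ?thesis
    proof (cases "finite (nbrs E x)")
      case False
      then show ?thesis using xR M0 p p1
        by (simp add: mult_nonneg_nonneg power_le_one)
    next
      case fin: True
      have uN: "u \<in> nbrs E x" using u by (simp add: nbrs_def)
      have uV: "u \<in> V" using V Suc.prems u by blast
      have IHu: "av E R (m + j) u \<le> M * (1 - p ^ (lev x - 1))"
        using Suc.IH[OF uV] u Suc.prems by simp
      have Mz: "av E R (m + j) z \<le> M" if "z \<in> nbrs E x" for z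
      proof -
        have "z \<in> V" using V Suc.prems that by (auto simp: nbrs_def)
        then show ?thesis using av_le_M_V[of V E R m M z j] assms(1) M M0 by blast
      qed
      define T where "T = (\<Sum>z\<in>nbrs E x. trans_prob E x z * (M - av E R (m + j) z))"
      define S where "S = (\<Sum>z\<in>nbrs E x. trans_prob E x z * av E R (m + j) z)"
      define A where "A = trans_prob E x u * (M - av E R (m + j) u)"
      define Q where "Q = M * (\<Sum>z\<in>nbrs E x. trans_prob E x z)"
      have 1: "T \<ge> A" unfolding T_def A_def
        using fin uN by (intro member_le_sum) (auto intro!: mult_nonneg_nonneg trans_prob_nonneg simp: Mz)
      have 2: "A \<ge> p * (M * p ^ (lev x - 1))" unfolding A_def
      proof -
        have "M * p ^ (lev x - 1) \<le> M - av E R (m + j) u" using IHu by (simp add: algebra_simps)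
        moreover have "0 \<le> M * p ^ (lev x - 1)" using M0 p by simp
        ultimately show "trans_prob E x u * (M - av E R (m + j) u) \<ge> p * (M * p ^ (lev x - 1))"
          using u(3) p by (meson mult_mono trans_prob_nonneg order_trans)
      qed
      have 3: "p * (M * p ^ (lev x - 1)) = M * p ^ lev x"
        using False by (cases "lev x") auto
      have 4: "S = Q - T" unfolding S_def Q_def T_def
        by (simp add: algebra_simps sum_subtractf sum_distrib_left)
      have 5: "Q \<le> M" unfolding Q_def
        by (rule mult_left_le[OF sum_trans_le1 M0])
      have "S \<le> M - M * p ^ lev x" using 1 2 3 4 5 by linarith
      then show ?thesis using xR by (simp add: S_def algebra_simps)
    qed
  qed
qed

lemma av_geom:
  assumes V: "\<And>x z. x \<in> V \<Longrightarrow> E x z \<Longrightarrow> z \<in> V"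
    and prog: "\<And>x. x \<in> V \<Longrightarrow> lev x > 0 \<Longrightarrow> \<exists>u. E x u \<and> lev u = lev x - 1 \<and> p \<le> trans_prob E x u"
    and R: "\<And>x. x \<in> V \<Longrightarrow> x \<in> R \<longleftrightarrow> lev x = 0"
    and p: "0 \<le> p" "p \<le> 1"
    and L: "\<And>x. x \<in> V \<Longrightarrow> lev x \<le> L"
  shows "x \<in> V \<Longrightarrow> av E R (r + L * k) x \<le> (1 - p ^ L) ^ k"
proof (induction k arbitrary: x)
  case 0 then show ?case using av_le1 by simp
next
  case (Suc k)
  have pL: "0 \<le> 1 - p ^ L" using p by (simp add: power_le_one)
  have M: "z \<in> V \<Longrightarrow> av E R (r + L * k) z \<le> (1 - p ^ L) ^ k" for z
    using Suc.IH by blast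
  have "av E R (r + L * k + L) x \<le> (1 - p ^ L) ^ k * (1 - p ^ lev x)"
    by (rule av_climb[OF V prog R p(1) p(2) M]) (use Suc.prems L pL in auto)
  also have "\<dots> \<le> (1 - p ^ L) ^ k * (1 - p ^ L)"
    using Suc.prems L p pL by (intro mult_left_mono) (auto intro: power_decreasing)
  finally show ?case by (simp add: algebra_simps)
qed

lemma av_potential:
  assumes V: "\<And>x z. x \<in> V \<Longrightarrow> E x z \<Longrightarrow> z \<in> V"
    and pot: "\<And>x. x \<in> V \<Longrightarrow> x \<notin> R \<Longrightarrow> (\<Sum>z\<in>nbrs E x. trans_prob E x z * g z) \<le> \<theta> * g x"
    and g0: "\<And>x. 0 \<le> g x" and g1: "\<And>x. x \<in> V \<Longrightarrow> x \<notin> R \<Longrightarrow> 1 \<le> g x" and th: "0 \<le> \<theta>"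
  shows "x \<in> V \<Longrightarrow> av E R n x \<le> \<theta> ^ n * g x"
proof (induction n arbitrary: x)
  case 0 then show ?case using g0 g1 by auto
next
  case (Suc n)
  show ?case
  proof (cases "x \<in> R")
    case True then show ?thesis using g0 th by simp
  next
    case False
    have "(\<Sum>z\<in>nbrs E x. trans_prob E x z * av E R n z) \<le> (\<Sum>z\<in>nbrs E x. trans_prob E x z * (\<theta> ^ n * g z))"
      by (intro sum_mono mult_left_mono trans_prob_nonneg Suc.IH) (use V Suc.prems in \<open>auto simp: nbrs_def\<close>)
    also have "\<dots> = \<theta> ^ n * (\<Sum>z\<in>nbrs E x. trans_prob E x z * g z)"
      by (simp add: sum_distrib_left algebra_simps)
    also have "\<dots> \<le> \<theta> ^ n * (\<theta> * g x)" using pot[OF Suc.prems False] th by (simp add: mult_left_mono)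
    finally show ?thesis using False by (simp add: ac_simps)
  qed
qed

lemma rw_potential:
  assumes V: "\<And>x z. x \<in> V \<Longrightarrow> E x z \<Longrightarrow> z \<in> V"
    and pot: "\<And>x. x \<in> V \<Longrightarrow> (\<Sum>z\<in>nbrs E x. trans_prob E x z * g z) \<le> \<theta> * g x"
    and g0: "\<And>x. 0 \<le> g x" and g1: "1 \<le> g y" and th: "0 \<le> \<theta>"
  shows "x \<in> V \<Longrightarrow> rw_prob E n x y \<le> \<theta> ^ n * g x"
proof (induction n arbitrary: x)
  case 0 then show ?case using g0 g1 by auto
next
  case (Suc n)
  have "rw_prob E (Suc n) x y \<le> (\<Sum>z\<in>nbrs E x. trans_prob E x z * (\<theta> ^ n * g z))"
    unfolding rw_prob.simps
    by (intro sum_mono mult_left_mono trans_prob_nonneg Suc.IH) (use V Suc.prems in \<open>auto simp: nbrs_def\<close>)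
  also have "\<dots> = \<theta> ^ n * (\<Sum>z\<in>nbrs E x. trans_prob E x z * g z)"
    by (simp add: sum_distrib_left algebra_simps)
  also have "\<dots> \<le> \<theta> ^ n * (\<theta> * g x)" using pot[OF Suc.prems] th by (simp add: mult_left_mono)
  finally show ?case by (simp add: ac_simps)
qed

lemma rw_forward:
  assumes sym: "\<And>a b. E a b = E b a" and fin: "\<And>a. finite (nbrs E a)"
  shows "rw_prob E (Suc n) x y = (\<Sum>z\<in>nbrs E y. rw_prob E n x z * trans_prob E z y)"
proof (induction n arbitrary: x)
  case 0
  have "rw_prob E (Suc 0) x y = (\<Sum>z\<in>nbrs E x. if z = y then trans_prob E x z else 0)"
    by (auto intro: sum.cong)
  also have "\<dots> = (if E x y then trans_prob E x y else 0)"
    using fin[of x] by (simp add: sum.delta nbrs_def)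
  also have "\<dots> = (\<Sum>z\<in>nbrs E y. if z = x then trans_prob E z y else 0)"
    using fin[of y] by (simp add: nbrs_def sym[of x y] sum.delta)
  also have "\<dots> = (\<Sum>z\<in>nbrs E y. rw_prob E 0 x z * trans_prob E z y)"
    by (auto intro: sum.cong)
  finally show ?case .
next
  case (Suc n)
  have "rw_prob E (Suc (Suc n)) x y = (\<Sum>z\<in>nbrs E x. trans_prob E x z * rw_prob E (Suc n) z y)"
    by (rule rw_prob.simps(2))
  also have "\<dots> = (\<Sum>z\<in>nbrs E x. trans_prob E x z * (\<Sum>u\<in>nbrs E y. rw_prob E n z u * trans_prob E u y))"
    by (simp only: Suc.IH)
  also have "\<dots> = (\<Sum>u\<in>nbrs E y. (\<Sum>z\<in>nbrs E x. trans_prob E x z * rw_prob E n z u) * trans_prob E u y)"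
    by (simp add: sum_distrib_left sum_distrib_right sum.swap[of _ "nbrs E y"] algebra_simps)
  also have "\<dots> = (\<Sum>u\<in>nbrs E y. rw_prob E (Suc n) x u * trans_prob E u y)" by simp
  finally show ?case .
qed

lemma rw_reversible:
  assumes sym: "\<And>a b. E a b = E b a" and fin: "\<And>a. finite (nbrs E a)"
  shows "rw_prob E n x y * card (nbrs E x) = rw_prob E n y x * card (nbrs E y)"
proof (induction n arbitrary: x y)
  case 0 then show ?case by auto
next
  case (Suc n)
  have w: "\<And>a b. E a b \<Longrightarrow> card (nbrs E a) > 0"
    using fin by (metis card_gt_0_iff empty_iff mem_Collect_eq nbrs_def)
  have "rw_prob E (Suc n) x y * card (nbrs E x) = (\<Sum>z\<in>nbrs E x. rw_prob E n z y)"
    unfolding rw_prob.simps sum_distrib_right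
    by (rule sum.cong) (auto simp: trans_prob_eq nbrs_def dest!: w)
  also have "\<dots> = (\<Sum>z\<in>nbrs E x. card (nbrs E y) * (rw_prob E n y z * trans_prob E z x))"
  proof (rule sum.cong)
    fix z assume z: "z \<in> nbrs E x"
    then have Ezx: "E z x" using sym by (simp add: nbrs_def)
    have "rw_prob E n z y * card (nbrs E z) = rw_prob E n y z * card (nbrs E y)" by (rule Suc.IH)
    then show "rw_prob E n z y = card (nbrs E y) * (rw_prob E n y z * trans_prob E z x)"
      using w[OF Ezx] Ezx by (simp add: trans_prob_eq field_simps)
  qed simp
  also have "\<dots> = card (nbrs E y) * rw_prob E (Suc n) y x"
    by (simp only: rw_forward[OF sym fin, of n y x] sum_distrib_left)
  finally show ?case by simp
qed

section \<open>The tree\<close>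

lemma tree_vert_Nil[simp]: "tree_vert d []" by (simp add: tree_vert_def)

lemma tree_vert_Cons: "tree_vert d (a # v) \<longleftrightarrow> (if v = [] then a \<le> d else a < d \<and> tree_vert d v)"
  by (cases v) (auto simp: tree_vert_def)

lemma tree_vert_tl: "tree_vert d v \<Longrightarrow> tree_vert d (tl v)"
  by (cases v) (auto simp: tree_vert_Cons split: if_splits)

lemma tree_vert_append: "tree_vert d (p @ b) \<Longrightarrow> tree_vert d b"
  by (induction p) (auto simp: tree_vert_Cons split: if_splits)

lemma tree_edge_sym: "tree_edge d u v = tree_edge d v u"
  by (auto simp: tree_edge_def)

lemma tree_nbrs: "tree_vert d x \<Longrightarrow> nbrs (tree_edge d) x =
   (if x = [] then (\<lambda>a. [a]) ` {..d} else insert (tl x) ((\<lambda>a. a # x) ` {..<d}))"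
  apply (cases x)
   apply (auto simp: nbrs_def tree_edge_def tree_vert_Cons image_iff split: if_splits)
  done

lemma tree_nbrs_notv: "\<not> tree_vert d x \<Longrightarrow> nbrs (tree_edge d) x = {}"
  by (auto simp: nbrs_def tree_edge_def)

lemma tree_nbrs_finite: "finite (nbrs (tree_edge d) x)"
  by (cases "tree_vert d x") (auto simp: tree_nbrs tree_nbrs_notv)

lemma tree_nbrs_card: "tree_vert d x \<Longrightarrow> card (nbrs (tree_edge d) x) = Suc d"
proof -
  assume v: "tree_vert d x"
  show ?thesis
  proof (cases "x = []")
    case True
    then show ?thesis using v by (simp add: tree_nbrs card_image inj_on_def)
  next
    case False
    have "tl x \<notin> (\<lambda>a. a # x) ` {..<d}" using False by (auto dest: arg_cong[of _ _ length])
    then show ?thesis using v False by (simp add: tree_nbrs card_image inj_on_def)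
  qed
qed

lemma tree_trans: "tree_vert d x \<Longrightarrow> z \<in> nbrs (tree_edge d) x \<Longrightarrow> trans_prob (tree_edge d) x z = 1 / (real d + 1)"
  using tree_nbrs_card[of d x] by (simp add: trans_prob_eq nbrs_def)

lemma path_up: "tree_vert d (p @ b) \<Longrightarrow> (tree_edge d ^^ length p) (p @ b) b"
proof (induction p)
  case Nil then show ?case by simp
next
  case (Cons a p)
  have tv: "tree_vert d (p @ b)" using Cons.prems by (auto simp: tree_vert_Cons split: if_splits)
  have "tree_edge d (a # p @ b) (p @ b)" using Cons.prems tv by (auto simp: tree_edge_def)
  then have "(tree_edge d ^^ Suc (length p)) (a # p @ b) b" using Cons.IH[OF tv] by (rule relpowp_Suc_I2)
  then show ?case by simp
qed

lemma path_down: "tree_vert d (p @ b) \<Longrightarrow> (tree_edge d ^^ length p) b (p @ b)"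
proof (induction p)
  case Nil then show ?case by simp
next
  case (Cons a p)
  have tv: "tree_vert d (p @ b)" using Cons.prems by (auto simp: tree_vert_Cons split: if_splits)
  have "tree_edge d (p @ b) (a # p @ b)" using Cons.prems tv by (auto simp: tree_edge_def)
  with Cons.IH[OF tv] have "(tree_edge d ^^ Suc (length p)) b (a # p @ b)" by (rule relpowp_Suc_I)
  then show ?case by simp
qed

lemma path_len: "(tree_edge d ^^ k) x y \<Longrightarrow> length y \<le> length x + k"
proof (induction k arbitrary: y)
  case 0 then show ?case by simp
next
  case (Suc k)
  then obtain z where "(tree_edge d ^^ k) x z" "tree_edge d z y" by auto
  then show ?case using Suc.IH by (fastforce simp: tree_edge_def)
qed

lemma graph_dist_le: "(E ^^ k) x y \<Longrightarrow> graph_dist E x y \<le> k"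
  unfolding graph_dist_def by (rule Least_le)

lemma graph_dist_root: "tree_vert d v \<Longrightarrow> graph_dist (tree_edge d) [] v = length v"
proof -
  assume v: "tree_vert d v"
  have p: "(tree_edge d ^^ length v) [] v" using path_down[of d v "[]"] v by simp
  have "graph_dist (tree_edge d) [] v \<le> length v" using graph_dist_le[OF p] .
  moreover have "(tree_edge d ^^ graph_dist (tree_edge d) [] v) [] v"
    unfolding graph_dist_def by (rule LeastI[of _ "length v"]) (rule p)
  then have "length v \<le> graph_dist (tree_edge d) [] v" using path_len by fastforce
  ultimately show ?thesis by simp
qed

lemma ball_vert_iff: "ball_vert d N v \<longleftrightarrow> tree_vert d v \<and> length v \<le> N"
  by (auto simp: ball_vert_def graph_dist_root)

lemma graph_dist_via: "tree_vert d (p @ b) \<Longrightarrow> tree_vert d (q @ b) \<Longrightarrow>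
   graph_dist (tree_edge d) (p @ b) (q @ b) \<le> length p + length q"
  by (rule graph_dist_le) (auto simp: relpowp_add intro: path_up path_down)

fun cpl :: "nat list \<Rightarrow> nat list \<Rightarrow> nat" where
  "cpl (a # r) (b # t) = (if a = b then Suc (cpl r t) else 0)"
| "cpl _ _ = 0"

lemma cpl_le1: "cpl r t \<le> length r"
  by (induction r t rule: cpl.induct) auto

lemma cpl_le2: "cpl r t \<le> length t"
  by (induction r t rule: cpl.induct) auto

lemma cpl_snoc: "cpl (r @ [a]) t = (if cpl r t = length r \<and> length r < length t \<and> t ! length r = a
   then Suc (cpl r t) else cpl r t)"
proof (induction r arbitrary: t)
  case Nil then show ?case by (cases t) auto
next
  case (Cons c r)
  then show ?case by (cases t) auto
qed

lemma cpl_full: "cpl r t = length r \<Longrightarrow> length r = length t \<Longrightarrow> r = t"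
  by (induction r t rule: cpl.induct) (auto split: if_splits)

lemma cpl_butlast: "r \<noteq> [] \<Longrightarrow> cpl (butlast r) t = (if cpl r t = length r then length r - 1 else cpl r t)"
proof -
  assume "r \<noteq> []"
  then obtain br a where r: "r = br @ [a]" by (metis append_butlast_last_id)
  show ?thesis using cpl_snoc[of br a t] cpl_le1[of br t] by (simp add: r)
qed

definition tdist :: "nat list \<Rightarrow> nat list \<Rightarrow> nat" where
  "tdist y x = length x + length y - 2 * cpl (rev x) (rev y)"

lemma tdist_child: "tdist y (a # x) =
  (if cpl (rev x) (rev y) = length x \<and> length x < length y \<and> rev y ! length x = a
   then tdist y x - 1 else tdist y x + 1)"
proof -
  define m where "m = cpl (rev x) (rev y)"
  have m1: "m \<le> length x" using cpl_le1[of "rev x" "rev y"] by (simp add: m_def)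
  have m2: "m \<le> length y" using cpl_le2[of "rev x" "rev y"] by (simp add: m_def)
  have c: "cpl (rev (a # x)) (rev y) = (if m = length x \<and> length x < length y \<and> rev y ! length x = a
     then Suc m else m)"
    using cpl_snoc[of "rev x" a "rev y"] by (simp add: m_def)
  show ?thesis
  proof (cases "m = length x \<and> length x < length y \<and> rev y ! length x = a")
    case True
    then have cc: "cpl (rev (a # x)) (rev y) = Suc m" using c by simp
    have "length (a # x) + length y - 2 * Suc m = (length x + length y - 2 * m) - 1"
      using True by simp
    then show ?thesis using cc unfolding tdist_def m_def[symmetric] if_P[OF True] by simp
  next
    case False
    then have cc: "cpl (rev (a # x)) (rev y) = m" using c by auto
    have "length (a # x) + length y - 2 * m = (length x + length y - 2 * m) + 1"
      using m1 m2 by simp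
    then show ?thesis using cc unfolding tdist_def m_def[symmetric] if_not_P[OF False] by simp
  qed
qed

lemma tdist_parent: "x \<noteq> [] \<Longrightarrow> tdist y (tl x) =
  (if cpl (rev x) (rev y) = length x then tdist y x + 1 else tdist y x - 1)"
proof -
  assume xne: "x \<noteq> []"
  define m where "m = cpl (rev x) (rev y)"
  have m1: "m \<le> length x" using cpl_le1[of "rev x" "rev y"] by (simp add: m_def)
  have m2: "m \<le> length y" using cpl_le2[of "rev x" "rev y"] by (simp add: m_def)
  have c: "cpl (rev (tl x)) (rev y) = (if m = length x then length x - 1 else m)"
    using cpl_butlast[of "rev x" "rev y"] xne by (simp add: m_def butlast_rev)
  have lx: "length (tl x) = length x - 1" by simp
  have x1: "length x \<ge> 1" using xne by (cases x) auto
  show ?thesis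
  proof (cases "m = length x")
    case True
    then have cc: "cpl (rev (tl x)) (rev y) = length x - 1" using c by simp
    have "length x - 1 + length y - 2 * (length x - 1) = (length x + length y - 2 * m) + 1"
      using True x1 m2 by simp
    then show ?thesis using cc unfolding tdist_def m_def[symmetric] lx if_P[OF True] by simp
  next
    case False
    then have cc: "cpl (rev (tl x)) (rev y) = m" using c by simp
    have "length x - 1 + length y - 2 * m = (length x + length y - 2 * m) - 1"
      using False m1 m2 x1 by simp
    then show ?thesis using cc unfolding tdist_def m_def[symmetric] lx if_not_P[OF False] by simp
  qed
qed

lemma cpl_self: "cpl r r = length r" by (induction r) auto

lemma tdist_self: "tdist y y = 0"
  by (simp add: tdist_def cpl_self)

lemma tdist_pos: "x \<noteq> y \<Longrightarrow> tdist y x \<ge> 1"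
proof (rule ccontr)
  assume xy: "x \<noteq> y" and "\<not> tdist y x \<ge> 1"
  then have t0: "length x + length y \<le> 2 * cpl (rev x) (rev y)" by (simp add: tdist_def)
  have m1: "cpl (rev x) (rev y) \<le> length x" using cpl_le1[of "rev x" "rev y"] by simp
  have m2: "cpl (rev x) (rev y) \<le> length y" using cpl_le2[of "rev x" "rev y"] by simp
  have "cpl (rev x) (rev y) = length (rev x)" "length (rev x) = length (rev y)" using t0 m1 m2 by auto
  then have "rev x = rev y" by (rule cpl_full)
  then show False using xy by simp
qed

lemma sum_if_one:
  fixes u v :: real
  assumes "finite A" "card A = Suc k" "v \<le> u" "0 \<le> v"
  shows "(\<Sum>a\<in>A. if a = a0 then u else v) \<le> u + k * v"
proof (cases "a0 \<in> A")
  case True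
  have "(\<Sum>a\<in>A. if a = a0 then u else v) = u + (\<Sum>a\<in>A - {a0}. if a = a0 then u else v)"
    by (subst sum.remove[OF assms(1) True]) simp
  also have "(\<Sum>a\<in>A - {a0}. if a = a0 then u else v) = (\<Sum>a\<in>A - {a0}. v)" by (rule sum.cong) auto
  also have "\<dots> = k * v" using assms True by simp
  finally show ?thesis by simp
next
  case False
  have "(\<Sum>a\<in>A. if a = a0 then u else v) = (\<Sum>a\<in>A. v)" by (rule sum.cong) (use False in auto)
  also have "\<dots> = v + k * v" using assms by (simp add: algebra_simps)
  finally show ?thesis using assms by simp
qed

lemma tree_pot_sum:
  assumes d: "d \<ge> 2" and x: "tree_vert d x"
  defines "s \<equiv> (2::real) / 3"
  shows "(\<Sum>z\<in>nbrs (tree_edge d) x. s ^ tdist y z) \<le> (real (4 * d + 9) / 6) * s ^ tdist y x"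
proof -
  define m where "m = cpl (rev x) (rev y)"
  define e where "e = tdist y x"
  have s0: "0 < s" "s \<le> 1" by (auto simp: s_def)
  have vu: "s ^ (e + 1) \<le> s ^ (e - 1)" using s0 by (intro power_decreasing) auto
  have ch: "(\<Sum>a\<in>A. s ^ tdist y (a # x)) \<le> (\<Sum>a\<in>A. if a = rev y ! length x then s ^ (e - 1) else s ^ (e + 1))" for A
  proof (rule sum_mono)
    fix a assume "a \<in> A"
    show "s ^ tdist y (a # x) \<le> (if a = rev y ! length x then s ^ (e - 1) else s ^ (e + 1))"
      using vu by (cases "a = rev y ! length x") (auto simp: tdist_child e_def)
  qed
  show ?thesis
  proof (cases "x = y")
    case True
    have "(\<Sum>z\<in>nbrs (tree_edge d) x. s ^ tdist y z) = (\<Sum>z\<in>nbrs (tree_edge d) x. s)"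
    proof (rule sum.cong)
      fix z assume "z \<in> nbrs (tree_edge d) x"
      have "tdist y z = 1"
      proof (cases "x = []")
        case True
        then obtain a where "z = [a]" using \<open>z \<in> _\<close> x by (auto simp: tree_nbrs)
        then show ?thesis using \<open>x = y\<close> True by (simp add: tdist_def)
      next
        case False
        then have "z = tl x \<or> (\<exists>a. z = a # x)" using \<open>z \<in> _\<close> x by (auto simp: tree_nbrs)
        then show ?thesis
        proof
          assume "z = tl x" then show ?thesis
            using tdist_parent[OF False, of y] \<open>x = y\<close> tdist_self[of y] cpl_self[of "rev y"] by simp
        next
          assume "\<exists>a. z = a # x" then obtain a where "z = a # x" by auto
          then show ?thesis using tdist_child[of y a x] \<open>x = y\<close> tdist_self[of y] by auto
        qed
      qed
      then show "s ^ tdist y z = s" by simp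
    qed simp
    also have "\<dots> = (real d + 1) * s" using tree_nbrs_card[OF x] by simp
    also have "\<dots> \<le> (real (4 * d + 9) / 6) * s ^ tdist y x" using True tdist_self[of y] by (simp add: s_def)
    finally show ?thesis .
  next
    case False
    have e1: "e \<ge> 1" using tdist_pos[OF False] by (simp add: e_def)
    have ee: "s ^ (e - 1) = s ^ e / s" "s ^ (e + 1) = s ^ e * s"
      using e1 s0 by (auto simp: power_Suc[symmetric] field_simps simp del: power_Suc)
    have goal: "(real (4 * d + 9) / 6) * s ^ e = s ^ (e - 1) + d * s ^ (e + 1)"
      unfolding ee by (simp add: s_def field_simps)
    show ?thesis
    proof (cases "m = length x")
      case mx: True
      show ?thesis
      proof (cases "x = []")
        case True
        have "(\<Sum>z\<in>nbrs (tree_edge d) x. s ^ tdist y z) = (\<Sum>a\<in>{..d}. s ^ tdist y (a # x))"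
          using True x by (simp add: tree_nbrs sum.reindex inj_on_def)
        also have "\<dots> \<le> (\<Sum>a\<in>{..d}. if a = rev y ! length x then s ^ (e - 1) else s ^ (e + 1))" by (rule ch)
        also have "\<dots> \<le> s ^ (e - 1) + d * s ^ (e + 1)"
          using sum_if_one[of "{..d}" d "s ^ (e + 1)" "s ^ (e - 1)"] vu s0 by simp
        finally show ?thesis using goal unfolding e_def by linarith
      next
        case xne: False
        have tlnot: "tl x \<notin> (\<lambda>a. a # x) ` {..<d}" using xne by (auto dest: arg_cong[of _ _ length])
        have "(\<Sum>z\<in>nbrs (tree_edge d) x. s ^ tdist y z) = s ^ tdist y (tl x) + (\<Sum>a\<in>{..<d}. s ^ tdist y (a # x))"
          using xne x tlnot by (simp add: tree_nbrs sum.reindex inj_on_def)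
        also have "s ^ tdist y (tl x) = s ^ (e + 1)" using tdist_parent[OF xne, of y] mx by (simp add: m_def e_def)
        also have "(\<Sum>a\<in>{..<d}. s ^ tdist y (a # x)) \<le> s ^ (e - 1) + (d - 1) * s ^ (e + 1)"
          using order_trans[OF ch[of "{..<d}"] sum_if_one[of "{..<d}" "d - 1" "s ^ (e + 1)" "s ^ (e - 1)"]] vu s0 d by simp
        finally have "(\<Sum>z\<in>nbrs (tree_edge d) x. s ^ tdist y z) \<le> s ^ (e - 1) + d * s ^ (e + 1)"
          using d by (simp add: of_nat_diff algebra_simps)
        then show ?thesis using goal unfolding e_def by linarith
      qed
    next
      case mx: False
      then have xne: "x \<noteq> []" using cpl_le1[of "rev x" "rev y"] by (auto simp: m_def)
      have tlnot: "tl x \<notin> (\<lambda>a. a # x) ` {..<d}" using xne by (auto dest: arg_cong[of _ _ length])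
      have "(\<Sum>z\<in>nbrs (tree_edge d) x. s ^ tdist y z) = s ^ tdist y (tl x) + (\<Sum>a\<in>{..<d}. s ^ tdist y (a # x))"
        using xne x tlnot by (simp add: tree_nbrs sum.reindex inj_on_def)
      also have "s ^ tdist y (tl x) = s ^ (e - 1)" using tdist_parent[OF xne, of y] mx by (simp add: m_def e_def)
      also have "(\<Sum>a\<in>{..<d}. s ^ tdist y (a # x)) = (\<Sum>a\<in>{..<d}. s ^ (e + 1))"
        by (rule sum.cong) (use mx in \<open>auto simp: tdist_child m_def e_def\<close>)
      finally have "(\<Sum>z\<in>nbrs (tree_edge d) x. s ^ tdist y z) \<le> s ^ (e - 1) + d * s ^ (e + 1)" by simp
      then show ?thesis using goal unfolding e_def by linarith
    qed
  qed
qed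

theorem part1:
  assumes d: "d \<ge> 2"
  shows "\<exists>c>0. \<forall>n y0 y. tree_vert d y0 \<and> tree_vert d y \<longrightarrow>
          rw_prob (tree_edge d) n y0 y \<le> exp (- c * real n)"
proof -
  define \<theta> where "\<theta> = real (4 * d + 9) / (6 * (real d + 1))"
  define s where "s = (2::real) / 3"
  have th0: "0 < \<theta>" "\<theta> < 1" using d by (auto simp: \<theta>_def field_simps)
  have main: "rw_prob (tree_edge d) n x y \<le> \<theta> ^ n" if "tree_vert d x" for n x y
  proof -
    have "rw_prob (tree_edge d) n x y \<le> \<theta> ^ n * s ^ tdist y x"
    proof (rule rw_potential[where V="{v. tree_vert d v}" and g="\<lambda>v. s ^ tdist y v"])
      show "\<And>x z. x \<in> {v. tree_vert d v} \<Longrightarrow> tree_edge d x z \<Longrightarrow> z \<in> {v. tree_vert d v}"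
        by (auto simp: tree_edge_def)
      show "(\<Sum>z\<in>nbrs (tree_edge d) x. trans_prob (tree_edge d) x z * s ^ tdist y z) \<le> \<theta> * s ^ tdist y x"
        if "x \<in> {v. tree_vert d v}" for x
      proof -
        have xv: "tree_vert d x" using that by simp
        have "(\<Sum>z\<in>nbrs (tree_edge d) x. trans_prob (tree_edge d) x z * s ^ tdist y z)
           = (1 / (real d + 1)) * (\<Sum>z\<in>nbrs (tree_edge d) x. s ^ tdist y z)"
          by (simp add: sum_distrib_left tree_trans[OF xv])
        also have "\<dots> \<le> (1 / (real d + 1)) * ((real (4 * d + 9) / 6) * s ^ tdist y x)"
          using tree_pot_sum[OF d xv, of y] by (intro mult_left_mono) (auto simp: s_def)
        also have "\<dots> = \<theta> * s ^ tdist y x" by (simp add: \<theta>_def field_simps)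
        finally show ?thesis .
      qed
    qed (use that th0 in \<open>auto simp: s_def tdist_self\<close>)
    also have "\<dots> \<le> \<theta> ^ n" using th0 by (simp add: s_def power_le_one mult_left_le)
    finally show ?thesis .
  qed
  define c where "c = - ln \<theta>"
  have c0: "c > 0" using th0 by (simp add: c_def)
  have "\<theta> ^ n = exp (- c * real n)" for n
  proof -
    have "\<theta> ^ n = exp (ln (\<theta> ^ n))" using th0 by simp
    also have "ln (\<theta> ^ n) = real n * ln \<theta>" using th0 by (simp add: ln_realpow)
    finally show ?thesis by (simp add: c_def mult.commute)
  qed
  then show ?thesis using c0 main by (metis)
qed

section \<open>The diamond graph\<close>

definition dup :: "nat \<times> (nat \<Rightarrow> nat) \<Rightarrow> nat \<times> (nat \<Rightarrow> nat)" where
  "dup y = (Suc (fst y), \<lambda>i. snd y (Suc i))"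

lemma dia_vert_up: "dia_vert d y \<Longrightarrow> dia_vert d (dup y)"
proof -
  assume v: "dia_vert d y"
  have "{i. snd y (Suc i) \<noteq> 1} = Suc -` {i. snd y i \<noteq> 1}" by auto
  moreover have "finite (Suc -` {i. snd y i \<noteq> 1})" using v by (intro finite_vimageI) (auto simp: dia_vert_def)
  ultimately show ?thesis using v by (auto simp: dia_vert_def dup_def)
qed

lemma dia_edge_up: "dia_vert d y \<Longrightarrow> dia_edge d y (dup y)"
  using dia_vert_up by (auto simp: dia_edge_def dia_up_def dup_def)

lemma dia_nbrs_sub: "nbrs (dia_edge d) y \<subseteq> insert (dup y) ((\<lambda>a. (fst y - 1, case_nat a (snd y))) ` {1..d})"
proof
  fix z assume "z \<in> nbrs (dia_edge d) y"
  then have e: "dia_vert d y" "dia_vert d z" "dia_up y z \<or> dia_up z y" by (auto simp: nbrs_def dia_edge_def)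
  show "z \<in> insert (dup y) ((\<lambda>a. (fst y - 1, case_nat a (snd y))) ` {1..d})"
    using e(3)
  proof
    assume "dia_up y z"
    then have "z = dup y" by (cases z) (auto simp: dia_up_def dup_def)
    then show ?thesis by simp
  next
    assume u: "dia_up z y"
    have "snd z = case_nat (snd z 0) (snd y)"
    proof
      fix i show "snd z i = case_nat (snd z 0) (snd y) i" using u by (cases i) (auto simp: dia_up_def)
    qed
    moreover have "fst z = fst y - 1" using u by (simp add: dia_up_def)
    moreover have "snd z 0 \<in> {1..d}" using e(2) by (auto simp: dia_vert_def)
    ultimately show ?thesis by (cases z) auto
  qed
qed

lemma dia_nbrs_finite: "finite (nbrs (dia_edge d) y)"
  by (rule finite_subset[OF dia_nbrs_sub]) auto

lemma dia_nbrs_card: "card (nbrs (dia_edge d) y) \<le> Suc d"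
proof -
  have "card (nbrs (dia_edge d) y) \<le> card (insert (dup y) ((\<lambda>a. (fst y - 1, case_nat a (snd y))) ` {1..d}))"
    by (rule card_mono[OF _ dia_nbrs_sub]) auto
  also have "\<dots> \<le> Suc (card ((\<lambda>a. (fst y - 1, case_nat a (snd y))) ` {1..d}))" by (rule card_insert_le_m1) auto
  also have "\<dots> \<le> Suc (card {1..d})" using card_image_le[of "{1..d}"] by simp
  finally show ?thesis by simp
qed

lemma dia_trans_up: "dia_vert d y \<Longrightarrow> 1 / (real d + 1) \<le> trans_prob (dia_edge d) y (dup y)"
proof -
  assume v: "dia_vert d y"
  have "dup y \<in> nbrs (dia_edge d) y" using dia_edge_up[OF v] by (simp add: nbrs_def)
  then have "card (nbrs (dia_edge d) y) > 0" using dia_nbrs_finite card_gt_0_iff by blast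
  then show ?thesis using dia_nbrs_card[of d y] dia_edge_up[OF v]
    by (simp add: trans_prob_eq frac_le)
qed

definition dsig :: "(nat \<Rightarrow> nat \<Rightarrow> nat) \<Rightarrow> nat \<times> (nat \<Rightarrow> nat) \<Rightarrow> nat \<times> (nat \<Rightarrow> nat)" where
  "dsig F y = (fst y, \<lambda>i. F (fst y + i) (snd y i))"

lemma dsig_inv: "(\<And>j c. F j (F j c) = c) \<Longrightarrow> dsig F (dsig F y) = y"
  by (simp add: dsig_def)

lemma dsig_vert:
  assumes inv: "\<And>j c. F j (F j c) = c" and rng: "\<And>j c. 1 \<le> c \<Longrightarrow> c \<le> d \<Longrightarrow> 1 \<le> F j c \<and> F j c \<le> d"
    and fix_: "\<And>j c. j \<ge> L \<Longrightarrow> F j c = c"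
  shows "dia_vert d (dsig F y) = dia_vert d y"
proof -
  have one: "dia_vert d (dsig F z)" if v: "dia_vert d z" for z
  proof -
    have "{i. F (fst z + i) (snd z i) \<noteq> 1} \<subseteq> {i. snd z i \<noteq> 1} \<union> {..<L}"
      using fix_ by (auto simp: not_less)
    then have "finite {i. F (fst z + i) (snd z i) \<noteq> 1}"
      using v by (auto simp: dia_vert_def intro: finite_subset)
    then show ?thesis using v rng by (auto simp: dia_vert_def dsig_def)
  qed
  show ?thesis using one[of y] one[of "dsig F y"] dsig_inv[where F=F and y=y, OF inv] by auto
qed

lemma dsig_edge:
  assumes inv: "\<And>j c. F j (F j c) = c" and rng: "\<And>j c. 1 \<le> c \<Longrightarrow> c \<le> d \<Longrightarrow> 1 \<le> F j c \<and> F j c \<le> d"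
    and fix_: "\<And>j c. j \<ge> L \<Longrightarrow> F j c = c"
  shows "dia_edge d (dsig F a) (dsig F b) = dia_edge d a b"
proof -
  have inj: "F j c = F j c' \<longleftrightarrow> c = c'" for j c c' by (metis inv)
  have up: "dia_up (dsig F a) (dsig F b) = dia_up a b" for a b
    by (auto simp: dia_up_def dsig_def inj)
  show ?thesis using dsig_vert[where F=F and L=L and y=a, OF assms] dsig_vert[where F=F and L=L and y=b, OF assms] up[of a b] up[of b a]
    by (simp add: dia_edge_def)
qed

definition sw :: "nat \<Rightarrow> nat \<Rightarrow> nat \<Rightarrow> nat" where
  "sw a b c = (if c = a then b else if c = b then a else c)"

lemma sw_inv: "sw a b (sw a b c) = c" by (simp add: sw_def)

lemma sw_rng: "a \<in> S \<Longrightarrow> b \<in> S \<Longrightarrow> c \<in> S \<Longrightarrow> sw a b c \<in> S" by (simp add: sw_def)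

definition pre :: "nat list \<Rightarrow> (nat \<Rightarrow> nat) \<Rightarrow> nat \<Rightarrow> nat" where
  "pre p t i = (if i < length p then p ! i else t (i - length p))"

lemma pre_inj: "length p = length q \<Longrightarrow> pre p t = pre q t \<Longrightarrow> p = q"
  apply (rule nth_equalityI, simp)
  subgoal premises h for i
  proof -
    have "pre p t i = pre q t i" using h(2) by simp
    then show ?thesis using h(1,3) by (simp add: pre_def)
  qed
  done

lemma dia_sym_bound:
  assumes d: "d \<ge> 1" and y: "dia_vert d y" and x: "dia_vert d x" and hL: "fst y \<le> L" and xL: "fst x \<ge> L"
  shows "rw_prob (dia_edge d) n x y \<le> 1 / real d ^ (L - fst y)"
proof -
  define h where "h = fst y"
  define m where "m = L - h"
  define t where "t = (\<lambda>i. snd y (i + m))"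
  define P where "P = {p. set p \<subseteq> {1..d} \<and> length p = m}"
  define W where "W = (\<lambda>p. (h, pre p t)) ` P"
  have finP: "finite P" unfolding P_def by (rule finite_lists_length_eq) simp
  have cardP: "card P = d ^ m" unfolding P_def using card_lists_length_eq[of "{1..d}" m] by simp
  have injW: "inj_on (\<lambda>p. (h, pre p t)) P" by (auto simp: inj_on_def P_def intro: pre_inj)
  have cardW: "card W = d ^ m" unfolding W_def using card_image[OF injW] cardP by simp
  have finW: "finite W" unfolding W_def using finP by simp
  have eq: "rw_prob (dia_edge d) n x w = rw_prob (dia_edge d) n x y" if w: "w \<in> W" for w
  proof -
    obtain p where p: "p \<in> P" "w = (h, pre p t)" using w by (auto simp: W_def)
    define F where "F = (\<lambda>j c. if h \<le> j \<and> j < L then sw (snd y (j - h)) (p ! (j - h)) c else c)"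
    have inv: "F j (F j c) = c" for j c by (simp add: F_def sw_inv)
    have rng: "1 \<le> F j c \<and> F j c \<le> d" if "1 \<le> c" "c \<le> d" for j c
    proof (cases "h \<le> j \<and> j < L")
      case True
      have a: "snd y (j - h) \<in> {1..d}" using y by (auto simp: dia_vert_def)
      have "j - h < length p" using True p by (auto simp: P_def m_def)
      then have "p ! (j - h) \<in> set p" by (rule nth_mem)
      then have b: "p ! (j - h) \<in> {1..d}" using p by (auto simp: P_def)
      have "F j c \<in> {1..d}" using True sw_rng[OF a b, of c] that by (simp add: F_def)
      then show ?thesis by simp
    qed (use that in \<open>auto simp: F_def\<close>)
    have fix_: "F j c = c" if "j \<ge> L" for j c using that by (simp add: F_def)
    have sx: "dsig F x = x" using xL fix_ by (cases x) (auto simp: dsig_def)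
    have sy: "dsig F y = w"
    proof -
      have "F (h + i) (snd y i) = pre p t i" for i
      proof (cases "i < m")
        case True
        then show ?thesis using p by (auto simp: F_def pre_def sw_def P_def m_def)
      next
        case False
        then show ?thesis using p by (auto simp: F_def pre_def t_def P_def m_def)
      qed
      then show ?thesis using p by (cases y) (auto simp: dsig_def h_def)
    qed
    have "rw_prob (dia_edge d) n (dsig F x) (dsig F y) = rw_prob (dia_edge d) n x y"
      by (rule rw_auto) (auto simp: dsig_inv[OF inv] dsig_edge[OF inv rng fix_])
    then show ?thesis using sx sy by simp
  qed
  have "(\<Sum>w\<in>W. rw_prob (dia_edge d) n x y) \<le> 1"
    using sum_rw_le1[OF finW, of "dia_edge d" n x] eq by simp
  then have "real d ^ m * rw_prob (dia_edge d) n x y \<le> 1" using cardW by simp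
  then show ?thesis using d by (simp add: m_def h_def field_simps)
qed

lemma dia_bound:
  assumes d: "d \<ge> 2" and y: "dia_vert d y" and x: "dia_vert d x" and hL: "fst y \<le> L" and L1: "L \<ge> 1"
  shows "rw_prob (dia_edge d) n x y \<le> 1 / real d ^ (L - fst y) + (1 - (1 / (real d + 1)) ^ L) ^ (n div L)"
proof -
  define R where "R = {v :: nat \<times> (nat \<Rightarrow> nat). fst v \<ge> L}"
  define c where "c = 1 / real d ^ (L - fst y)"
  have c0: "0 \<le> c" by (simp add: c_def)
  have inR: "rw_prob (dia_edge d) t v y \<le> c" if "v \<in> R" for v t
  proof (cases "dia_vert d v")
    case True then show ?thesis using dia_sym_bound[of d y v L t] d y hL that by (simp add: R_def c_def)
  next
    case False
    then have "nbrs (dia_edge d) v = {}" by (auto simp: nbrs_def dia_edge_def)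
    moreover have "v \<noteq> y" using False y by auto
    ultimately show ?thesis using c0 by (cases t) auto
  qed
  have h1: "rw_prob (dia_edge d) n x y \<le> c + av (dia_edge d) R n x"
    by (rule hit_decomp[where F="\<lambda>t v. rw_prob (dia_edge d) t v y"]) (auto simp: rw_le1 inR c0)
  have h2: "av (dia_edge d) R (n mod L + L * (n div L)) x \<le> (1 - (1 / (real d + 1)) ^ L) ^ (n div L)"
  proof (rule av_geom[where V="{v. dia_vert d v}" and lev="\<lambda>v. L - fst v"])
    show "\<And>x z. x \<in> {v. dia_vert d v} \<Longrightarrow> dia_edge d x z \<Longrightarrow> z \<in> {v. dia_vert d v}"
      by (auto simp: dia_edge_def)
    show "\<exists>u. dia_edge d x u \<and> L - fst u = L - fst x - 1 \<and> 1 / (real d + 1) \<le> trans_prob (dia_edge d) x u"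
      if "x \<in> {v. dia_vert d v}" "0 < L - fst x" for x
      using that dia_edge_up[of d x] dia_trans_up[of d x] by (intro exI[of _ "dup x"]) (auto simp: dup_def)
  qed (use x in \<open>auto simp: R_def\<close>)
  have "n mod L + L * (n div L) = n" by simp
  then show ?thesis using h1 h2 by (simp add: c_def)
qed

section \<open>Asymptotics\<close>

definition kap :: "nat \<Rightarrow> nat \<Rightarrow> nat" where
  "kap d n = nat \<lfloor>(99/100) * ln (real n) / ln (real d + 1)\<rfloor>"

lemma ln_d1: "d \<ge> 2 \<Longrightarrow> ln (real d + 1) \<ge> 1"
proof -
  assume "d \<ge> 2"
  then have "exp 1 \<le> real d + 1" using exp_le by linarith
  then have "ln (exp 1) \<le> ln (real d + 1)" by (subst ln_le_cancel_iff) auto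
  then show ?thesis by simp
qed

lemma kap_le: "d \<ge> 2 \<Longrightarrow> n \<ge> 1 \<Longrightarrow> real (kap d n) \<le> (99/100) * ln (real n) / ln (real d + 1)"
proof -
  assume d: "d \<ge> 2" and n: "n \<ge> 1"
  have "0 \<le> (99/100) * ln (real n) / ln (real d + 1)" using d n ln_d1[OF d] by simp
  then show ?thesis unfolding kap_def by linarith
qed

lemma kap_ge: "d \<ge> 2 \<Longrightarrow> n \<ge> 1 \<Longrightarrow> real (kap d n) \<ge> (99/100) * ln (real n) / ln (real d + 1) - 1"
  unfolding kap_def by linarith

lemma kap_ln: "d \<ge> 2 \<Longrightarrow> n \<ge> 1 \<Longrightarrow> real (kap d n) \<le> ln (real n)"
proof -
  assume d: "d \<ge> 2" and n: "n \<ge> 1"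
  have l: "ln (real d + 1) \<ge> 1" by (rule ln_d1[OF d])
  have ln0: "ln (real n) \<ge> 0" using n by simp
  have "(99/100) * ln (real n) / ln (real d + 1) \<le> (99/100) * ln (real n) / 1"
    using l ln0 d by (intro divide_left_mono) auto
  then have "(99/100) * ln (real n) / ln (real d + 1) \<le> ln (real n)" using ln0 by simp
  then show ?thesis using kap_le[OF d n] by linarith
qed

lemma kap_pow_le: "d \<ge> 2 \<Longrightarrow> n \<ge> 1 \<Longrightarrow> (real d + 1) ^ kap d n \<le> real n powr (99/100)"
proof -
  assume d: "d \<ge> 2" and n: "n \<ge> 1"
  have l: "ln (real d + 1) \<ge> 1" by (rule ln_d1[OF d])
  have "(real d + 1) ^ kap d n = exp (real (kap d n) * ln (real d + 1))"
    by (simp add: exp_of_nat_mult[symmetric] ln_realpow[symmetric])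
  also have "\<dots> \<le> exp ((99/100) * ln (real n))"
  proof -
    have "real (kap d n) * ln (real d + 1) \<le> ((99/100) * ln (real n) / ln (real d + 1)) * ln (real d + 1)"
      using kap_le[OF d n] l by (intro mult_right_mono) auto
    also have "\<dots> = (99/100) * ln (real n)" using l d by simp
    finally show ?thesis by simp
  qed
  also have "\<dots> = real n powr (99/100)" using n by (simp add: powr_def)
  finally show ?thesis .
qed

lemma d8: "d \<ge> 2 \<Longrightarrow> (real d + 1) ^ 5 \<le> real d ^ 8"
proof -
  assume d: "d \<ge> 2"
  have "(2 * (real d + 1)) ^ 5 \<le> (3 * real d) ^ 5" using d by (intro power_mono) auto
  moreover have "(2 * (real d + 1)) ^ 5 = 32 * (real d + 1) ^ 5" "(3 * real d) ^ 5 = 243 * real d ^ 5"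
    by (simp_all only: power_mult_distrib) simp_all
  ultimately have a: "32 * (real d + 1) ^ 5 \<le> 243 * real d ^ 5" by simp
  have "real d ^ 3 \<ge> 2 ^ 3" using d by (intro power_mono) auto
  then have "real d ^ 3 * real d ^ 5 \<ge> 8 * real d ^ 5" by (intro mult_right_mono) auto
  then have "real d ^ 8 \<ge> 8 * real d ^ 5" by (simp add: power_add[symmetric])
  moreover have "0 \<le> real d ^ 5" by simp
  ultimately show ?thesis using a by linarith
qed

lemma ln_ratio: "d \<ge> 2 \<Longrightarrow> 5 * ln (real d + 1) \<le> 8 * ln (real d)"
proof -
  assume d: "d \<ge> 2"
  have "ln ((real d + 1) ^ 5) \<le> ln (real d ^ 8)" using d8[OF d] d by (subst ln_le_cancel_iff) auto
  then show ?thesis using d by (simp add: ln_realpow)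
qed

lemma kap_pow_ge: "d \<ge> 2 \<Longrightarrow> n \<ge> 1 \<Longrightarrow> real n powr (99/160) / real d \<le> real d ^ kap d n"
proof -
  assume d: "d \<ge> 2" and n: "n \<ge> 1"
  have l: "ln (real d + 1) \<ge> 1" by (rule ln_d1[OF d])
  have lnd: "ln (real d) > 0" using d by simp
  have ln0: "ln (real n) \<ge> 0" using n by simp
  have lp: "ln (real d + 1) > 0" using l by linarith
  have r: "ln (real d) / ln (real d + 1) \<ge> 5/8"
    by (subst pos_le_divide_eq[OF lp]) (use ln_ratio[OF d] in linarith)
  have "real n powr (99/160) / real d = exp ((99/160) * ln (real n) - ln (real d))"
    using n d by (simp add: powr_def exp_diff)
  also have "\<dots> \<le> exp (((99/100) * ln (real n) / ln (real d + 1) - 1) * ln (real d))"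
  proof -
    have "(99/100) * ln (real n) * (5/8) \<le> (99/100) * ln (real n) * (ln (real d) / ln (real d + 1))"
      using r ln0 by (intro mult_left_mono) auto
    then have "(99/160) * ln (real n) \<le> (99/100) * ln (real n) * (ln (real d) / ln (real d + 1))"
      by simp
    then show ?thesis by (simp add: algebra_simps)
  qed
  also have "\<dots> \<le> exp (real (kap d n) * ln (real d))"
    using kap_ge[OF d n] lnd by (simp add: mult_right_mono)
  also have "\<dots> = real d ^ kap d n"
    using d by (simp add: exp_of_nat_mult[symmetric] ln_realpow[symmetric])
  finally show ?thesis .
qed

lemma one_minus_pow: "0 \<le> x \<Longrightarrow> x \<le> 1 \<Longrightarrow> (1 - x) ^ q \<le> exp (- real q * x)"
proof -
  assume x: "0 \<le> x" "x \<le> 1"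
  have "1 - x \<le> exp (- x)" using exp_ge_add_one_self[of "-x"] by simp
  then have "(1 - x) ^ q \<le> exp (- x) ^ q" using x by (intro power_mono) auto
  also have "\<dots> = exp (- real q * x)" by (simp add: exp_of_nat_mult[symmetric])
  finally show ?thesis .
qed

lemma geo_tail:
  assumes d: "d \<ge> 2" and n: "n \<ge> 2" and K: "K \<ge> 1" and Kk: "K \<le> kap d n"
  shows "(1 - (1 / (real d + 1)) ^ K) ^ (n div K) \<le> exp (- (real n / ln (real n) - 1) / real n powr (99/100))"
proof -
  have n1: "n \<ge> 1" using n by simp
  define y where "y = 1 / real n powr (99/100)"
  have lnpos: "ln (real n) > 0" using n by simp
  have np: "real n powr (99/100) > 0" using n by simp
  have x: "(1 / (real d + 1)) ^ K \<ge> y"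
  proof -
    have "(real d + 1) ^ K \<le> (real d + 1) ^ kap d n" using Kk by (intro power_increasing) auto
    also have "\<dots> \<le> real n powr (99/100)" by (rule kap_pow_le[OF d n1])
    finally have le: "(real d + 1) ^ K \<le> real n powr (99/100)" .
    have "1 / real n powr (99/100) \<le> 1 / (real d + 1) ^ K"
      by (rule divide_left_mono[OF le]) (use np in auto)
    then show ?thesis unfolding y_def by (simp add: power_one_over)
  qed
  have x1: "(1 / (real d + 1)) ^ K \<le> 1" by (simp add: power_le_one)
  have y0: "0 \<le> y" by (simp add: y_def)
  have q: "real (n div K) \<ge> real n / ln (real n) - 1"
  proof -
    have m: "n mod K < K" using K by simp
    have "real n = real (n div K * K + n mod K)" by simp
    also have "\<dots> = real (n div K) * real K + real (n mod K)" by (simp only: of_nat_add of_nat_mult)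
    finally have "real n < real (n div K) * real K + real K" using m by linarith
    then have "real n < (real (n div K) + 1) * real K" by (simp add: algebra_simps)
    then have "real n / real K < real (n div K) + 1" using K by (subst pos_divide_less_eq) auto
    moreover have "real n / ln (real n) \<le> real n / real K"
      using kap_ln[OF d n1] Kk K lnpos by (intro divide_left_mono) auto
    ultimately show ?thesis by linarith
  qed
  have "(1 - (1 / (real d + 1)) ^ K) ^ (n div K) \<le> exp (- real (n div K) * (1 / (real d + 1)) ^ K)"
    by (rule one_minus_pow) (use x1 in auto)
  also have "\<dots> \<le> exp (- (real n / ln (real n) - 1) * y)"
  proof -
    have "(real n / ln (real n) - 1) * y \<le> real (n div K) * y" using q y0 by (intro mult_right_mono)
    also have "\<dots> \<le> real (n div K) * (1 / (real d + 1)) ^ K" using x by (intro mult_left_mono) auto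
    finally have "- (real (n div K) * (1 / (real d + 1)) ^ K) \<le> - ((real n / ln (real n) - 1) * y)"
      by linarith
    then show ?thesis by (simp only: exp_le_cancel_iff mult_minus_left)
  qed
  also have "\<dots> = exp (- (real n / ln (real n) - 1) / real n powr (99/100))" by (simp add: y_def)
  finally show ?thesis .
qed

lemma ev_real_nat: "eventually P at_top \<Longrightarrow> eventually (\<lambda>n::nat. P (real n)) sequentially"
  by (rule eventually_compose_filterlim[OF _ filterlim_real_sequentially])

lemma ev_tail: "eventually (\<lambda>n::nat. exp (- (real n / ln (real n) - 1) / real n powr (99/100)) \<le> real n powr (-3/5) / 2) sequentially"
proof -
  have "eventually (\<lambda>x::real. exp (- (x / ln x - 1) / x powr (99/100)) \<le> x powr (-3/5) / 2) at_top"
    by real_asymp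
  then show ?thesis by (rule ev_real_nat)
qed

lemma ev_powr_ge: "a > 0 \<Longrightarrow> eventually (\<lambda>n::nat. real n powr a \<ge> C) sequentially"
proof -
  assume a: "a > 0"
  have "filterlim (\<lambda>x::real. x powr a) at_top at_top" using a by (rule real_powr_at_top)
  then have "eventually (\<lambda>x::real. x powr a \<ge> C) at_top" unfolding filterlim_at_top by blast
  then show ?thesis by (rule ev_real_nat)
qed

lemma ev_kap: "d \<ge> 2 \<Longrightarrow> eventually (\<lambda>n. kap d n \<ge> M) sequentially"
proof -
  assume d: "d \<ge> 2"
  have l: "ln (real d + 1) \<ge> 1" by (rule ln_d1[OF d])
  have "filterlim (\<lambda>n::nat. ln (real n)) at_top sequentially"
    by (rule filterlim_compose[OF ln_at_top filterlim_real_sequentially])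
  then have e: "eventually (\<lambda>n::nat. ln (real n) \<ge> (real M + 1) * ln (real d + 1) * (100/99)) sequentially"
    unfolding filterlim_at_top by blast
  have e2: "eventually (\<lambda>n::nat. n \<ge> 1) sequentially" by (simp add: eventually_sequentially) blast
  show ?thesis using e e2
  proof eventually_elim
    case (elim n)
    have lp: "ln (real d + 1) > 0" using l by linarith
    have "real M + 1 \<le> (99/100) * ln (real n) / ln (real d + 1)"
      by (subst pos_le_divide_eq[OF lp]) (use elim(1) in linarith)
    then have "(99/100) * ln (real n) / ln (real d + 1) - 1 \<ge> real M" by linarith
    then have "real (kap d n) \<ge> real M" using kap_ge[OF d elim(2)] by linarith
    then show ?case by simp
  qed
qed

lemma part2_ev:
  assumes d: "d \<ge> 2"
  shows "eventually (\<lambda>n. \<forall>x y. dia_vert d x \<and> dia_vert d y \<and> fst y = h \<longrightarrow>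
      rw_prob (dia_edge d) n x y \<le> real n powr (-3/5)) sequentially"
proof -
  have e1: "eventually (\<lambda>n. kap d n \<ge> h + 1) sequentially" by (rule ev_kap[OF d])
  have e2: "eventually (\<lambda>n::nat. n \<ge> 2) sequentially" by (simp add: eventually_sequentially) blast
  have e3: "eventually (\<lambda>n::nat. real n powr (3/160) \<ge> 2 * real d ^ (h + 1)) sequentially"
    by (rule ev_powr_ge) simp
  show ?thesis using e1 e2 e3 ev_tail
  proof eventually_elim
    case (elim n)
    define K where "K = kap d n"
    have n1: "n \<ge> 1" using elim by simp
    have K1: "K \<ge> 1" "K \<ge> h" using elim by (auto simp: K_def)
    have dpos: "real d > 0" using d by simp
    show ?case
    proof (intro allI impI)
      fix x y assume xy: "dia_vert d x \<and> dia_vert d y \<and> fst y = h"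
      have "rw_prob (dia_edge d) n x y \<le> 1 / real d ^ (K - h) + (1 - (1 / (real d + 1)) ^ K) ^ (n div K)"
        using dia_bound[OF d, of y x K n] xy K1 by simp
      also have "(1 - (1 / (real d + 1)) ^ K) ^ (n div K) \<le> real n powr (-3/5) / 2"
        using geo_tail[OF d elim(2) K1(1)] elim(4) by (simp add: K_def)
      also have "1 / real d ^ (K - h) \<le> real n powr (-3/5) / 2"
      proof -
        have "1 / real d ^ (K - h) = real d ^ h / real d ^ K"
          using K1 dpos by (simp add: power_diff)
        also have "\<dots> \<le> real d ^ h / (real n powr (99/160) / real d)"
          using kap_pow_ge[OF d n1] n1 dpos by (intro divide_left_mono) (auto simp: K_def)
        also have "\<dots> = real d ^ (h + 1) / real n powr (99/160)" using dpos by (simp add: field_simps)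
        also have "real n powr (99/160) = real n powr (3/5) * real n powr (3/160)"
          by (simp add: powr_add[symmetric])
        also have "real d ^ (h + 1) / (real n powr (3/5) * real n powr (3/160)) \<le> real n powr (-3/5) / 2"
        proof -
          have p1: "real n powr (3/5) > 0" "real n powr (3/160) > 0" using n1 by auto
          have "real d ^ (h + 1) / (real n powr (3/5) * real n powr (3/160))
              \<le> (real n powr (3/160) / 2) / (real n powr (3/5) * real n powr (3/160))"
            using elim(3) p1 by (intro divide_right_mono) auto
          also have "\<dots> = 1 / (2 * real n powr (3/5))" using p1 by (simp add: field_simps)
          also have "\<dots> = real n powr (-3/5) / 2" using n1 by (simp add: powr_minus field_simps)
          finally show ?thesis .
        qed
        finally show ?thesis .
      qed
      finally show "rw_prob (dia_edge d) n x y \<le> real n powr (-3/5)" by simp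
    qed
  qed
qed

theorem part2:
  assumes d: "d \<ge> 2"
  shows "\<exists>c>0. \<exists>C C' :: nat \<Rightarrow> real. (\<forall>h. C h > 0 \<and> C' h > 0) \<and>
         (\<forall>n y0 y. n \<ge> 1 \<and> dia_vert d y0 \<and> dia_vert d y \<longrightarrow>
            rw_prob (dia_edge d) n y0 y
              \<le> real n powr (-3/5) + C (fst y) * exp (- C' (fst y) * real n powr c))"
proof -
  have "\<forall>h. \<exists>N::nat. \<forall>n\<ge>N. \<forall>x y. dia_vert d x \<and> dia_vert d y \<and> fst y = h \<longrightarrow>
      rw_prob (dia_edge d) n x y \<le> real n powr (-3/5)"
    using part2_ev[OF d] by (simp add: eventually_sequentially)
  then obtain N0 where N0: "\<And>h n x y. n \<ge> N0 h \<Longrightarrow> dia_vert d x \<Longrightarrow> dia_vert d y \<Longrightarrow> fst y = h \<Longrightarrow>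
      rw_prob (dia_edge d) n x y \<le> real n powr (-3/5)"
    by metis
  have main: "rw_prob (dia_edge d) n y0 y \<le> real n powr (-3/5) + exp (real (N0 (fst y))) * exp (- 1 * real n powr 1)"
    if a: "1 \<le> n" "dia_vert d y0" "dia_vert d y" for n :: nat and y0 y
  proof -
    have pos: "0 \<le> exp (real (N0 (fst y))) * exp (- 1 * real n powr 1)" by simp
    show ?thesis
    proof (cases "n \<ge> N0 (fst y)")
      case True
      then show ?thesis using N0[of "fst y" n y0 y] a by (intro add_increasing2[OF pos]) auto
    next
      case False
      have "rw_prob (dia_edge d) n y0 y \<le> 1" by (rule rw_le1)
      also have "1 \<le> exp (real (N0 (fst y))) * exp (- 1 * real n powr 1)"
        using False a by (simp add: exp_minus[symmetric] exp_add[symmetric] del: exp_le_one_iff)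
      finally show ?thesis by (intro add_increasing) auto
    qed
  qed
  show ?thesis
    apply (rule exI[where x=1], rule conjI, simp)
    apply (rule exI[where x="\<lambda>h. exp (real (N0 h))"], rule exI[where x="\<lambda>h. 1"])
    using main by auto
qed

section \<open>The ball\<close>

lemma ball_edge_iff: "ball_edge d N u v \<longleftrightarrow> tree_edge d u v \<and> length u \<le> N \<and> length v \<le> N"
  by (auto simp: ball_edge_def ball_vert_iff tree_edge_def)

lemma ball_edge_sym: "ball_edge d N u v = ball_edge d N v u"
  by (auto simp: ball_edge_iff tree_edge_sym)

lemma ball_nbrs_sub: "nbrs (ball_edge d N) x \<subseteq> nbrs (tree_edge d) x"
  by (auto simp: nbrs_def ball_edge_iff)

lemma ball_nbrs_finite: "finite (nbrs (ball_edge d N) x)"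
  by (rule finite_subset[OF ball_nbrs_sub tree_nbrs_finite])

lemma ball_nbrs_card: "card (nbrs (ball_edge d N) x) \<le> Suc d"
proof (cases "tree_vert d x")
  case True
  have "card (nbrs (ball_edge d N) x) \<le> card (nbrs (tree_edge d) x)"
    by (rule card_mono[OF tree_nbrs_finite ball_nbrs_sub])
  then show ?thesis using tree_nbrs_card[OF True] by simp
next
  case False
  then show ?thesis using tree_nbrs_notv[OF False] ball_nbrs_sub[of d N x] by auto
qed

lemma ball_nbrs_inner: "length x < N \<Longrightarrow> nbrs (ball_edge d N) x = nbrs (tree_edge d) x"
  by (auto simp: nbrs_def ball_edge_iff tree_edge_def)

lemma ball_nbrs_leaf: "tree_vert d x \<Longrightarrow> length x = N \<Longrightarrow> N \<ge> 1 \<Longrightarrow> nbrs (ball_edge d N) x = {tl x}"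
  by (cases x) (auto simp: nbrs_def ball_edge_iff tree_edge_def tree_vert_Cons split: if_splits)

lemma ball_parent: "tree_vert d x \<Longrightarrow> length x \<le> N \<Longrightarrow> x \<noteq> [] \<Longrightarrow> ball_edge d N x (tl x)"
  by (cases x) (auto simp: ball_edge_iff tree_edge_def tree_vert_Cons split: if_splits)

lemma ball_trans_parent: "tree_vert d x \<Longrightarrow> length x \<le> N \<Longrightarrow> x \<noteq> [] \<Longrightarrow>
   1 / (real d + 1) \<le> trans_prob (ball_edge d N) x (tl x)"
proof -
  assume a: "tree_vert d x" "length x \<le> N" "x \<noteq> []"
  have e: "ball_edge d N x (tl x)" by (rule ball_parent[OF a])
  then have "tl x \<in> nbrs (ball_edge d N) x" by (simp add: nbrs_def)
  then have "card (nbrs (ball_edge d N) x) > 0" using ball_nbrs_finite card_gt_0_iff by blast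
  then show ?thesis using ball_nbrs_card[of d N x] e by (simp add: trans_prob_eq frac_le)
qed

lemma ball_nonv: "\<not> (tree_vert d x \<and> length x \<le> N) \<Longrightarrow> nbrs (ball_edge d N) x = {}"
  by (auto simp: nbrs_def ball_edge_iff tree_edge_def)

lemma rw_nonv: "nbrs E x = {} \<Longrightarrow> x \<noteq> y \<Longrightarrow> rw_prob E t x y = 0"
  by (cases t) auto

fun lsw :: "(nat \<Rightarrow> nat \<Rightarrow> nat) \<Rightarrow> nat list \<Rightarrow> nat list" where
  "lsw F [] = []"
| "lsw F (a # v) = F (Suc (length v)) a # lsw F v"

lemma lsw_length[simp]: "length (lsw F v) = length v"
  by (induction v) auto

lemma lsw_nil_iff[simp]: "lsw F v = [] \<longleftrightarrow> v = []"
  by (cases v) auto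

lemma lsw_inv: "(\<And>j c. F j (F j c) = c) \<Longrightarrow> lsw F (lsw F v) = v"
  by (induction v) auto

lemma lsw_nth: "i < length v \<Longrightarrow> lsw F v ! i = F (length v - i) (v ! i)"
proof (induction v arbitrary: i)
  case Nil then show ?case by simp
next
  case (Cons a v) then show ?case by (cases i) auto
qed

lemma lsw_fix: "(\<And>j c. j \<le> length x \<Longrightarrow> F j c = c) \<Longrightarrow> lsw F x = x"
  by (induction x) auto

lemma lsw_tree_vert1:
  assumes r1: "\<And>j c. c \<le> d \<Longrightarrow> F j c \<le> d" and r2: "\<And>j c. j \<ge> 2 \<Longrightarrow> c < d \<Longrightarrow> F j c < d"
  shows "tree_vert d v \<Longrightarrow> tree_vert d (lsw F v)"
proof (induction v)
  case Nil then show ?case by simp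
next
  case (Cons a v)
  show ?case
  proof (cases "v = []")
    case True then show ?thesis using Cons.prems r1 by (simp add: tree_vert_Cons)
  next
    case False
    then have "length v \<ge> 1" by (cases v) auto
    then show ?thesis using Cons False r2 by (simp add: tree_vert_Cons)
  qed
qed

lemma lsw_tree_vert:
  assumes inv: "\<And>j c. F j (F j c) = c"
    and r1: "\<And>j c. c \<le> d \<Longrightarrow> F j c \<le> d" and r2: "\<And>j c. j \<ge> 2 \<Longrightarrow> c < d \<Longrightarrow> F j c < d"
  shows "tree_vert d (lsw F v) = tree_vert d v"
  using lsw_tree_vert1[where F=F and v=v, OF r1 r2] lsw_tree_vert1[where F=F and v="lsw F v", OF r1 r2]
    lsw_inv[where F=F and v=v, OF inv] by auto

lemma lsw_edge:
  assumes inv: "\<And>j c. F j (F j c) = c"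
    and r1: "\<And>j c. c \<le> d \<Longrightarrow> F j c \<le> d" and r2: "\<And>j c. j \<ge> 2 \<Longrightarrow> c < d \<Longrightarrow> F j c < d"
  shows "ball_edge d N (lsw F u) (lsw F v) = ball_edge d N u v"
proof -
  have inj: "lsw F u = lsw F v \<longleftrightarrow> u = v" for u v by (metis lsw_inv inv)
  have c: "(\<exists>a. lsw F u = a # lsw F v) \<longleftrightarrow> (\<exists>a. u = a # v)" for u v
    by (cases u) (auto simp: inj)
  show ?thesis using lsw_tree_vert[where F=F and v=u, OF inv r1 r2] lsw_tree_vert[where F=F and v=v, OF inv r1 r2]
    by (simp add: ball_edge_iff tree_edge_def c)
qed

lemma digit_le: "tree_vert d v \<Longrightarrow> i < length v \<Longrightarrow> v ! i \<le> d"
proof -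
  assume v: "tree_vert d v" and i: "i < length v"
  show ?thesis
  proof (cases "i = length v - 1")
    case True
    then have "v ! i = last v" using i by (cases v rule: rev_cases) (auto simp: nth_append)
    then show ?thesis using v i by (auto simp: tree_vert_def)
  next
    case False
    then have "v ! i = butlast v ! i" using i by (simp add: nth_butlast)
    moreover have "butlast v ! i \<in> set (butlast v)" using i False by (intro nth_mem) simp
    ultimately show ?thesis using v i by (auto simp: tree_vert_def)
  qed
qed

lemma digit_lt: "tree_vert d v \<Longrightarrow> i < length v - 1 \<Longrightarrow> v ! i < d"
proof -
  assume v: "tree_vert d v" and i: "i < length v - 1"
  then have "v ! i = butlast v ! i" by (simp add: nth_butlast)
  moreover have "butlast v ! i \<in> set (butlast v)" using i by (intro nth_mem) simp
  moreover have "v \<noteq> []" using i by auto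
  ultimately show ?thesis using v by (auto simp: tree_vert_def)
qed

lemma ball_swap:
  assumes y: "tree_vert d y" and w: "tree_vert d w" and len: "length w = length y"
    and j: "j \<le> length y" and dr: "drop (length y - j) y = drop (length y - j) w"
  shows "\<exists>\<sigma>. (\<forall>a. \<sigma> (\<sigma> a) = a) \<and> (\<forall>a b. ball_edge d N (\<sigma> a) (\<sigma> b) = ball_edge d N a b) \<and>
     \<sigma> y = w \<and> (\<forall>x. length x \<le> j \<longrightarrow> \<sigma> x = x) \<and> (\<forall>v. tree_vert d (\<sigma> v) = tree_vert d v) \<and>
     (\<forall>v. length (\<sigma> v) = length v)"
proof -
  define l where "l = length y"
  define F where "F = (\<lambda>k c. if j < k \<and> k \<le> l then sw (y ! (l - k)) (w ! (l - k)) c else c)"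
  have inv: "F k (F k c) = c" for k c by (simp add: F_def sw_inv)
  have r1: "F k c \<le> d" if "c \<le> d" for k c
  proof (cases "j < k \<and> k \<le> l")
    case True
    then have "l - k < length y" "l - k < length w" using j len by (auto simp: l_def)
    then have "y ! (l - k) \<in> {..d}" "w ! (l - k) \<in> {..d}" using digit_le y w by auto
    then have "sw (y ! (l - k)) (w ! (l - k)) c \<in> {..d}" using that by (intro sw_rng) auto
    then show ?thesis using True by (simp add: F_def)
  qed (use that in \<open>auto simp: F_def\<close>)
  have r2: "F k c < d" if "k \<ge> 2" "c < d" for k c
  proof (cases "j < k \<and> k \<le> l")
    case True
    then have "l - k < length y - 1" "l - k < length w - 1" using j len that by (auto simp: l_def)
    then have "y ! (l - k) \<in> {..<d}" "w ! (l - k) \<in> {..<d}" using digit_lt y w by auto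
    then have "sw (y ! (l - k)) (w ! (l - k)) c \<in> {..<d}" using that by (intro sw_rng) auto
    then show ?thesis using True by (simp add: F_def)
  qed (use that in \<open>auto simp: F_def\<close>)
  have sy: "lsw F y = w"
  proof (rule nth_equalityI)
    show "length (lsw F y) = length w" using len by simp
    fix i assume "i < length (lsw F y)"
    then have i: "i < l" by (simp add: l_def)
    show "lsw F y ! i = w ! i"
    proof (cases "j < l - i")
      case True
      then show ?thesis using i by (simp add: lsw_nth l_def F_def sw_def)
    next
      case False
      then have "l - j \<le> i" by simp
      then have "drop (l - j) y ! (i - (l - j)) = drop (l - j) w ! (i - (l - j))"
        using dr by (simp add: l_def)
      then have "y ! i = w ! i" using \<open>l - j \<le> i\<close> i len j by (simp add: l_def)
      then show ?thesis using i False by (simp add: lsw_nth l_def F_def)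
    qed
  qed
  show ?thesis
  proof (intro exI[of _ "lsw F"] conjI allI impI)
    show "lsw F (lsw F a) = a" for a by (rule lsw_inv[OF inv])
    show "ball_edge d N (lsw F a) (lsw F b) = ball_edge d N a b" for a b by (rule lsw_edge[OF inv r1 r2])
    show "lsw F y = w" by (rule sy)
    show "lsw F x = x" if "length x \<le> j" for x using that by (intro lsw_fix) (auto simp: F_def)
    show "tree_vert d (lsw F v) = tree_vert d v" for v by (rule lsw_tree_vert[OF inv r1 r2])
  qed simp
qed

definition levs :: "nat \<Rightarrow> nat \<Rightarrow> nat list set" where
  "levs d l = {v. tree_vert d v \<and> length v = l}"

definition Lam :: "nat \<Rightarrow> nat \<Rightarrow> nat \<Rightarrow> nat list \<Rightarrow> nat \<Rightarrow> real" where
  "Lam d N t x l = (\<Sum>w\<in>levs d l. rw_prob (ball_edge d N) t x w)"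

lemma levs_finite: "finite (levs d l)"
proof -
  have "levs d l \<subseteq> {xs. set xs \<subseteq> {..d} \<and> length xs = l}"
    by (auto simp: levs_def in_set_conv_nth intro: digit_le)
  then show ?thesis by (rule finite_subset) (rule finite_lists_length_eq, simp)
qed

lemma tree_vert_app: "tree_vert d b \<Longrightarrow> set p \<subseteq> {..<d} \<Longrightarrow> tree_vert d (p @ b)"
  by (induction p) (auto simp: tree_vert_Cons)

lemma plists_card: "card {p. set p \<subseteq> {..<(d::nat)} \<and> length p = m} = d ^ m"
  using card_lists_length_eq[of "{..<d}" m] by simp

lemma plists_finite: "finite {p. set p \<subseteq> {..<(d::nat)} \<and> length p = m}"
  by (rule finite_lists_length_eq) simp

lemma levs_card_ge: "card (levs d N) \<ge> d ^ N"
proof -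
  have "{p. set p \<subseteq> {..<d} \<and> length p = N} \<subseteq> levs d N"
    using tree_vert_app[of d "[]"] by (auto simp: levs_def)
  then have "card {p. set p \<subseteq> {..<d} \<and> length p = N} \<le> card (levs d N)"
    by (rule card_mono[OF levs_finite])
  then show ?thesis by (simp add: plists_card)
qed

lemma levs_card_le: "d \<ge> 1 \<Longrightarrow> real (card (levs d l)) \<le> 2 * real d ^ l"
proof (cases l)
  case 0
  assume "d \<ge> 1"
  have "levs d l = {[]}" using 0 by (auto simp: levs_def)
  then show ?thesis using \<open>d \<ge> 1\<close> 0 by simp
next
  case (Suc m)
  assume d: "d \<ge> 1"
  define P where "P = {p. set p \<subseteq> {..<d} \<and> length p = m}"
  have "levs d l \<subseteq> (\<lambda>(p, a). p @ [a]) ` (P \<times> {..d})"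
  proof
    fix v assume v: "v \<in> levs d l"
    then have ne: "v \<noteq> []" using Suc by (auto simp: levs_def)
    have "v = butlast v @ [last v]" using ne by simp
    moreover have "butlast v \<in> P" using v ne Suc by (auto simp: levs_def tree_vert_def P_def)
    moreover have "last v \<le> d" using v ne by (auto simp: levs_def tree_vert_def)
    ultimately show "v \<in> (\<lambda>(p, a). p @ [a]) ` (P \<times> {..d})" by (auto simp: image_iff)
  qed
  then have "card (levs d l) \<le> card ((\<lambda>(p, a). p @ [a]) ` (P \<times> {..d}))"
    by (rule card_mono[rotated]) (simp add: P_def plists_finite)
  also have "\<dots> \<le> card (P \<times> {..d})" by (rule card_image_le) (simp add: P_def plists_finite)
  also have "\<dots> = d ^ m * (d + 1)" by (simp add: P_def plists_card card_cartesian_product)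
  finally have c: "card (levs d l) \<le> d ^ m * (d + 1)" .
  have "real (card (levs d l)) \<le> real (d ^ m * (d + 1))" using c by (simp only: of_nat_le_iff)
  also have "\<dots> = real d ^ m * (real d + 1)" by (simp add: algebra_simps)
  also have "\<dots> \<le> real d ^ m * (2 * real d)" using d by (intro mult_left_mono) auto
  also have "\<dots> = 2 * real d ^ l" using Suc by simp
  finally show ?thesis .
qed

lemma sym_bound:
  assumes y: "tree_vert d y" and j: "j \<le> length y" and x: "length x \<le> j"
  shows "real d ^ (length y - j) * rw_prob (ball_edge d N) t x y \<le> Lam d N t x (length y)"
proof -
  define l where "l = length y"
  define b where "b = drop (l - j) y"
  define P where "P = {p. set p \<subseteq> {..<d} \<and> length p = l - j}"
  define D where "D = (\<lambda>p. p @ b) ` P"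
  have yb: "y = take (l - j) y @ b" by (simp add: b_def)
  have tb: "tree_vert d b" using y yb tree_vert_append by metis
  have lb: "length b = j" using j by (simp add: b_def l_def)
  have injD: "inj_on (\<lambda>p. p @ b) P" by (auto simp: inj_on_def)
  have cardD: "card D = d ^ (l - j)" unfolding D_def using card_image[OF injD] by (simp add: P_def plists_card)
  have finD: "finite D" unfolding D_def P_def using plists_finite by simp
  have Dsub: "D \<subseteq> levs d l" using tb lb j by (auto simp: D_def P_def levs_def l_def intro: tree_vert_app)
  have eq: "rw_prob (ball_edge d N) t x w = rw_prob (ball_edge d N) t x y" if wD: "w \<in> D" for w
  proof -
    obtain p where p: "p \<in> P" "w = p @ b" using wD by (auto simp: D_def)
    have tw: "tree_vert d w" using p tb by (auto simp: P_def intro: tree_vert_app)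
    have lw: "length w = length y" using p lb j by (simp add: P_def l_def)
    have dr: "drop (length y - j) y = drop (length y - j) w" using p lw lb j by (simp add: b_def l_def P_def)
    obtain \<sigma> where s: "\<forall>a. \<sigma> (\<sigma> a) = a" "\<forall>a b. ball_edge d N (\<sigma> a) (\<sigma> b) = ball_edge d N a b"
      "\<sigma> y = w" "\<forall>x. length x \<le> j \<longrightarrow> \<sigma> x = x"
      using ball_swap[OF y tw lw j dr, of N] by blast
    have "rw_prob (ball_edge d N) t (\<sigma> x) (\<sigma> y) = rw_prob (ball_edge d N) t x y"
      by (rule rw_auto) (use s in auto)
    then show ?thesis using s x by simp
  qed
  have "real d ^ (l - j) * rw_prob (ball_edge d N) t x y = (\<Sum>w\<in>D. rw_prob (ball_edge d N) t x w)"
    using eq cardD by simp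
  also have "\<dots> \<le> (\<Sum>w\<in>levs d l. rw_prob (ball_edge d N) t x w)"
    by (rule sum_mono2[OF levs_finite Dsub]) (simp add: rw_nonneg)
  finally show ?thesis by (simp add: Lam_def l_def)
qed

lemma leaf_bound:
  assumes d: "d \<ge> 1" and N: "N \<ge> 1" and u: "tree_vert d u" "length u = N"
  shows "Lam d N t u l \<le> 2 * (real d + 1) * real d ^ l / real d ^ N"
proof -
  define E where "E = ball_edge d N"
  define S where "S = (\<lambda>u. \<Sum>w\<in>levs d l. rw_prob E t w u)"
  have symE: "\<And>a b. E a b = E b a" by (simp add: E_def ball_edge_sym)
  have finE: "\<And>a. finite (nbrs E a)" by (simp add: E_def ball_nbrs_finite)
  have c1: "Lam d N t u l \<le> (real d + 1) * S u"
  proof -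
    have "rw_prob E t u w \<le> (real d + 1) * rw_prob E t w u" for w
    proof -
      have r: "rw_prob E t u w * card (nbrs E u) = rw_prob E t w u * card (nbrs E w)"
        by (rule rw_reversible[OF symE finE])
      have cu: "card (nbrs E u) = 1" using ball_nbrs_leaf[OF u N] by (simp add: E_def)
      have cw: "real (card (nbrs E w)) \<le> real d + 1" using ball_nbrs_card[of d N w] by (simp add: E_def)
      have "rw_prob E t u w = rw_prob E t w u * card (nbrs E w)" using r cu by simp
      also have "\<dots> \<le> rw_prob E t w u * (real d + 1)" by (rule mult_left_mono) (use cw rw_nonneg in auto)
      finally show ?thesis by (simp add: mult.commute)
    qed
    then show ?thesis unfolding Lam_def S_def E_def[symmetric] by (simp add: sum_distrib_left sum_mono)
  qed
  have c2: "S u' = S u" if u': "tree_vert d u'" "length u' = N" for u'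
  proof -
    have len: "length u' = length u" using u u' by simp
    obtain \<sigma> where s: "\<forall>a. \<sigma> (\<sigma> a) = a" "\<forall>a b. ball_edge d N (\<sigma> a) (\<sigma> b) = ball_edge d N a b"
      "\<sigma> u = u'" "\<forall>v. tree_vert d (\<sigma> v) = tree_vert d v" "\<forall>v. length (\<sigma> v) = length v"
      using ball_swap[of d u u' 0 N] u u' len by auto
    have inj: "inj \<sigma>" by (metis s(1) injI)
    have img: "\<sigma> ` levs d l = levs d l"
    proof
      show "\<sigma> ` levs d l \<subseteq> levs d l" using s by (auto simp: levs_def)
      show "levs d l \<subseteq> \<sigma> ` levs d l"
      proof
        fix v assume "v \<in> levs d l"
        then have "\<sigma> v \<in> levs d l" using s by (auto simp: levs_def)
        then show "v \<in> \<sigma> ` levs d l" using s(1) by (metis image_eqI)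
      qed
    qed
    have "rw_prob E t (\<sigma> w) (\<sigma> u) = rw_prob E t w u" for w
      by (rule rw_auto) (use s in \<open>auto simp: E_def\<close>)
    then have "(\<Sum>w\<in>levs d l. rw_prob E t (\<sigma> w) (\<sigma> u)) = S u" by (simp add: S_def)
    moreover have "(\<Sum>w\<in>levs d l. rw_prob E t (\<sigma> w) (\<sigma> u)) = (\<Sum>w\<in>\<sigma> ` levs d l. rw_prob E t w (\<sigma> u))"
      by (subst sum.reindex) (use inj in \<open>auto simp: inj_on_def\<close>)
    ultimately show ?thesis using img s(3) by (simp add: S_def)
  qed
  have c3: "real (card (levs d N)) * S u \<le> 2 * real d ^ l"
  proof -
    have "real (card (levs d N)) * S u = (\<Sum>u'\<in>levs d N. S u')"
      using c2 by (simp add: levs_def)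
    also have "\<dots> = (\<Sum>w\<in>levs d l. \<Sum>u'\<in>levs d N. rw_prob E t w u')"
      unfolding S_def by (rule sum.swap)
    also have "\<dots> \<le> (\<Sum>w\<in>levs d l. 1)"
      by (rule sum_mono) (rule sum_rw_le1[OF levs_finite])
    also have "\<dots> = real (card (levs d l))" by simp
    also have "\<dots> \<le> 2 * real d ^ l" by (rule levs_card_le[OF d])
    finally show ?thesis .
  qed
  have S0: "S u \<ge> 0" by (simp add: S_def sum_nonneg rw_nonneg)
  have dN: "real d ^ N \<le> real (card (levs d N))" using levs_card_ge[of d N] by (metis of_nat_le_iff of_nat_power)
  have "real d ^ N * S u \<le> real (card (levs d N)) * S u" using S0 dN by (rule mult_right_mono[rotated])
  then have "real d ^ N * S u \<le> 2 * real d ^ l" using c3 by linarith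
  then have "S u \<le> 2 * real d ^ l / real d ^ N" using d by (simp add: field_simps)
  then have "(real d + 1) * S u \<le> (real d + 1) * (2 * real d ^ l / real d ^ N)" by (intro mult_left_mono) auto
  also have "(real d + 1) * (2 * real d ^ l / real d ^ N) = 2 * (real d + 1) * real d ^ l / real d ^ N"
    by simp
  finally show ?thesis using c1 by linarith
qed

definition thb :: "nat \<Rightarrow> real" where "thb d = real (4 * d + 9) / (6 * (real d + 1))"

lemma thb_bounds: "d \<ge> 2 \<Longrightarrow> 2/3 \<le> thb d \<and> thb d \<le> 17/18 \<and> 0 < thb d"
  by (auto simp: thb_def field_simps)

lemma Lam_step: "Lam d N (Suc t) v l = (\<Sum>z\<in>nbrs (ball_edge d N) v. trans_prob (ball_edge d N) v z * Lam d N t z l)"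
  unfolding Lam_def rw_prob.simps sum_distrib_left by (rule sum.swap)

lemma Lam_le1: "Lam d N t v l \<le> 1"
  unfolding Lam_def by (rule sum_rw_le1[OF levs_finite])

lemma ball_pot:
  assumes d: "d \<ge> 2" and v: "tree_vert d v" and vN: "length v < N"
  shows "(\<Sum>z\<in>nbrs (ball_edge d N) v. trans_prob (ball_edge d N) v z * (3/2::real) ^ (N - length z))
      \<le> thb d * (3/2) ^ (N - length v)"
proof -
  define e where "e = N - length v"
  have e1: "e \<ge> 1" using vN by (simp add: e_def)
  have nb: "nbrs (ball_edge d N) v = nbrs (tree_edge d) v" by (rule ball_nbrs_inner[OF vN])
  have tp: "trans_prob (ball_edge d N) v z = 1 / (real d + 1)" if "z \<in> nbrs (ball_edge d N) v" for z
    using that tree_nbrs_card[OF v] nb by (simp add: trans_prob_eq nbrs_def)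
  have "(\<Sum>z\<in>nbrs (ball_edge d N) v. trans_prob (ball_edge d N) v z * (3/2::real) ^ (N - length z))
      = (1 / (real d + 1)) * (\<Sum>z\<in>nbrs (tree_edge d) v. (3/2::real) ^ (N - length z))"
    by (simp add: sum_distrib_left tp nb)
  also have "\<dots> \<le> thb d * (3/2) ^ e"
  proof (cases "v = []")
    case True
    have "(\<Sum>z\<in>nbrs (tree_edge d) v. (3/2::real) ^ (N - length z)) = (\<Sum>a\<in>{..d}. (3/2::real) ^ (e - 1))"
      using True v by (simp add: tree_nbrs sum.reindex inj_on_def e_def)
    also have "\<dots> = (real d + 1) * ((3/2) ^ e * (2/3))"
    proof -
      have "(3/2::real) ^ e = (3/2) ^ (e - 1) * (3/2)" using e1 by (metis Suc_diff_1 less_le_trans power_Suc2 zero_less_one)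
      then show ?thesis by simp
    qed
    finally have S: "(\<Sum>z\<in>nbrs (tree_edge d) v. (3/2::real) ^ (N - length z)) = (real d + 1) * ((3/2) ^ e * (2/3))" .
    have "(1 / (real d + 1)) * (\<Sum>z\<in>nbrs (tree_edge d) v. (3/2::real) ^ (N - length z)) = (2/3) * (3/2) ^ e"
      unfolding S by simp
    also have "\<dots> \<le> thb d * (3/2) ^ e" using thb_bounds[OF d] by (intro mult_right_mono) auto
    finally show ?thesis .
  next
    case False
    have tlnot: "tl v \<notin> (\<lambda>a. a # v) ` {..<d}" using False by (auto dest: arg_cong[of _ _ length])
    have "(\<Sum>z\<in>nbrs (tree_edge d) v. (3/2::real) ^ (N - length z))
        = (3/2::real) ^ (N - length (tl v)) + (\<Sum>a\<in>{..<d}. (3/2::real) ^ (N - length (a # v)))"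
      using False v tlnot by (simp add: tree_nbrs sum.reindex inj_on_def)
    also have "N - length (tl v) = e + 1" using False vN by (cases v) (auto simp: e_def)
    also have "(\<Sum>a\<in>{..<d}. (3/2::real) ^ (N - length (a # v))) = real d * (3/2) ^ (e - 1)"
      by (simp add: e_def)
    also have "(3/2::real) ^ (e + 1) + real d * (3/2) ^ (e - 1) = (3/2) ^ e * (3/2 + real d * (2/3))"
    proof -
      have "(3/2::real) ^ e = (3/2) ^ (e - 1) * (3/2)" using e1 by (metis Suc_diff_1 less_le_trans power_Suc2 zero_less_one)
      then show ?thesis by (simp add: algebra_simps)
    qed
    finally have S: "(\<Sum>z\<in>nbrs (tree_edge d) v. (3/2::real) ^ (N - length z)) = (3/2) ^ e * (3/2 + real d * (2/3))" .
    have th: "(3/2 + real d * (2/3)) / (real d + 1) = thb d" by (simp add: thb_def field_simps)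
    have "(1 / (real d + 1)) * (\<Sum>z\<in>nbrs (tree_edge d) v. (3/2::real) ^ (N - length z))
       = (3/2) ^ e * ((3/2 + real d * (2/3)) / (real d + 1))" unfolding S by simp
    also have "\<dots> = thb d * (3/2) ^ e" unfolding th by simp
    finally show ?thesis by simp
  qed
  finally show ?thesis by (simp add: e_def)
qed

lemma Lam_bound:
  assumes d: "d \<ge> 2" and N: "N \<ge> 1" and x: "tree_vert d x" "length x \<le> N"
  shows "Lam d N t x l \<le> 2 * (real d + 1) * real d ^ l / real d ^ N + thb d ^ t * (3/2) ^ N"
proof -
  define c where "c = 2 * (real d + 1) * real d ^ l / real d ^ N"
  have c0: "0 \<le> c" by (simp add: c_def)
  have h1: "Lam d N t x l \<le> c + av (ball_edge d N) (levs d N) t x"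
  proof (rule hit_decomp[where F="\<lambda>t v. Lam d N t v l"])
    show "Lam d N (Suc t) v l \<le> (\<Sum>z\<in>nbrs (ball_edge d N) v. trans_prob (ball_edge d N) v z * Lam d N t z l)" for t v
      by (simp add: Lam_step)
    show "Lam d N t v l \<le> 1" for t v by (rule Lam_le1)
    show "Lam d N t v l \<le> c" if "v \<in> levs d N" for v t
      using leaf_bound[of d N v t l] that d N by (auto simp: levs_def c_def)
  qed (rule c0)
  have h2: "av (ball_edge d N) (levs d N) t x \<le> thb d ^ t * (3/2::real) ^ (N - length x)"
  proof (rule av_potential[where V="{v. tree_vert d v \<and> length v \<le> N}" and g="\<lambda>v. (3/2::real) ^ (N - length v)"])
    show "\<And>x z. x \<in> {v. tree_vert d v \<and> length v \<le> N} \<Longrightarrow> ball_edge d N x z \<Longrightarrow> z \<in> {v. tree_vert d v \<and> length v \<le> N}"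
      by (auto simp: ball_edge_iff tree_edge_def)
    show "(\<Sum>z\<in>nbrs (ball_edge d N) v. trans_prob (ball_edge d N) v z * (3/2::real) ^ (N - length z))
      \<le> thb d * (3/2) ^ (N - length v)" if "v \<in> {v. tree_vert d v \<and> length v \<le> N}" "v \<notin> levs d N" for v
      using ball_pot[OF d, of v N] that by (auto simp: levs_def)
  qed (use x thb_bounds[OF d] in auto)
  have "(3/2::real) ^ (N - length x) \<le> (3/2) ^ N" by (rule power_increasing) auto
  then have "thb d ^ t * (3/2::real) ^ (N - length x) \<le> thb d ^ t * (3/2) ^ N"
    using thb_bounds[OF d] by (intro mult_left_mono) auto
  then show ?thesis using h1 h2 by (simp add: c_def)
qed

lemma ball_case2:
  assumes d: "d \<ge> 2" and K: "1 \<le> K" "K \<le> N"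
    and x: "tree_vert d x" "length x \<le> N" and y: "tree_vert d y" "length y \<le> N"
  shows "rw_prob (ball_edge d N) n x y \<le> 2 * (real d + 1) / real d ^ K + thb d ^ (n div 2) * (3/2) ^ N
     + (1 - (1 / (real d + 1)) ^ K) ^ ((n - n div 2) div K)"
proof -
  define l where "l = length y"
  define E where "E = ball_edge d N"
  have N1: "N \<ge> 1" using K by simp
  have dpos: "real d > 0" using d by simp
  have th: "0 < thb d" "thb d \<le> 1" using thb_bounds[OF d] by auto
  have tail0: "0 \<le> (1 - (1 / (real d + 1)) ^ K) ^ ((n - n div 2) div K)"
    by (simp add: power_le_one)
  have key: "2 * (real d + 1) * real d ^ l / real d ^ N / real d ^ (l - j) \<le> 2 * (real d + 1) / real d ^ K"
    if "j + K = N" "j \<le> l" for j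
  proof -
    have "real d ^ l = real d ^ j * real d ^ (l - j)" using that by (simp add: power_add[symmetric])
    moreover have "real d ^ N = real d ^ j * real d ^ K" using that by (simp add: power_add[symmetric])
    ultimately show ?thesis using dpos by (simp add: field_simps)
  qed
  show ?thesis
  proof (cases "l + K \<le> N")
    case True
    have "rw_prob E n x y \<le> Lam d N n x l"
      unfolding Lam_def E_def using y levs_finite[of d l] by (intro member_le_sum) (auto simp: levs_def l_def rw_nonneg)
    also have "\<dots> \<le> 2 * (real d + 1) * real d ^ l / real d ^ N + thb d ^ n * (3/2) ^ N"
      by (rule Lam_bound[OF d N1 x])
    also have "2 * (real d + 1) * real d ^ l / real d ^ N \<le> 2 * (real d + 1) / real d ^ K"
    proof -
      have "real d ^ (l + K) \<le> real d ^ N" by (rule power_increasing) (use True d in auto)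
      then have "real d ^ l / real d ^ N \<le> 1 / real d ^ K" using dpos by (simp add: power_add field_simps)
      then have "2 * (real d + 1) * (real d ^ l / real d ^ N) \<le> 2 * (real d + 1) * (1 / real d ^ K)"
        by (intro mult_left_mono) auto
      then show ?thesis by simp
    qed
    also have "thb d ^ n \<le> thb d ^ (n div 2)" using th by (intro power_decreasing) auto
    finally show ?thesis using tail0 by (simp add: E_def)
  next
    case False
    define j where "j = N - K"
    define T where "T = n div 2"
    define c where "c = 2 * (real d + 1) / real d ^ K + thb d ^ T * (3/2) ^ N"
    have jl: "j \<le> l" "j + K = N" using False K by (auto simp: j_def)
    have c0: "0 \<le> c" using th by (simp add: c_def)
    have inR: "rw_prob E (T + t) v y \<le> c" if "v \<in> {v. length v \<le> j}" for v t
    proof (cases "tree_vert d v")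
      case True
      have vj: "length v \<le> j" using that by simp
      have "real d ^ (l - j) * rw_prob E (T + t) v y \<le> Lam d N (T + t) v l"
        using sym_bound[OF y(1), of j v N "T + t"] jl vj by (simp add: l_def E_def)
      also have "\<dots> \<le> 2 * (real d + 1) * real d ^ l / real d ^ N + thb d ^ (T + t) * (3/2) ^ N"
        by (rule Lam_bound[OF d N1 True]) (use vj jl in auto)
      finally have a: "rw_prob E (T + t) v y \<le> (2 * (real d + 1) * real d ^ l / real d ^ N + thb d ^ (T + t) * (3/2) ^ N) / real d ^ (l - j)"
        using dpos by (simp add: field_simps mult.commute)
      also have "\<dots> = 2 * (real d + 1) * real d ^ l / real d ^ N / real d ^ (l - j) + thb d ^ (T + t) * (3/2) ^ N / real d ^ (l - j)"
        by (simp add: add_divide_distrib)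
      also have "\<dots> \<le> 2 * (real d + 1) / real d ^ K + thb d ^ T * (3/2) ^ N"
      proof (rule add_mono)
        show "2 * (real d + 1) * real d ^ l / real d ^ N / real d ^ (l - j) \<le> 2 * (real d + 1) / real d ^ K"
          by (rule key[OF jl(2) jl(1)])
        have d1: "1 \<le> real d ^ (l - j)" using d by (intro one_le_power) simp
        have "thb d ^ (T + t) * (3/2::real) ^ N / real d ^ (l - j) \<le> thb d ^ (T + t) * (3/2) ^ N / 1"
          using d1 th d by (intro divide_left_mono) auto
        then have "thb d ^ (T + t) * (3/2::real) ^ N / real d ^ (l - j) \<le> thb d ^ (T + t) * (3/2) ^ N"
          by simp
        also have "\<dots> \<le> thb d ^ T * (3/2) ^ N" using th by (intro mult_right_mono power_decreasing) auto
        finally show "thb d ^ (T + t) * (3/2::real) ^ N / real d ^ (l - j) \<le> thb d ^ T * (3/2) ^ N" .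
      qed
      finally show ?thesis by (simp add: c_def)
    next
      case False
      then have "nbrs E v = {}" using ball_nonv[of d v N] by (simp add: E_def)
      moreover have "v \<noteq> y" using False y by auto
      ultimately have "rw_prob E (T + t) v y = 0" by (rule rw_nonv)
      then show ?thesis using c0 by simp
    qed
    have h1: "rw_prob E (T + k) x y \<le> c + av E {v. length v \<le> j} k x" for k
      by (rule hit_decomp[where F="\<lambda>t v. rw_prob E (T + t) v y"]) (auto simp: rw_le1 inR c0)
    define k where "k = n - T"
    have nk: "n = T + k" by (simp add: k_def T_def)
    have h2: "av E {v. length v \<le> j} (k mod K + K * (k div K)) x \<le> (1 - (1 / (real d + 1)) ^ K) ^ (k div K)"
    proof (rule av_geom[where V="{v. tree_vert d v \<and> length v \<le> N}" and lev="\<lambda>v. length v - j"])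
      show "\<And>x z. x \<in> {v. tree_vert d v \<and> length v \<le> N} \<Longrightarrow> E x z \<Longrightarrow> z \<in> {v. tree_vert d v \<and> length v \<le> N}"
        by (auto simp: E_def ball_edge_iff tree_edge_def)
      show "\<exists>u. E v u \<and> length u - j = length v - j - 1 \<and> 1 / (real d + 1) \<le> trans_prob E v u"
        if "v \<in> {v. tree_vert d v \<and> length v \<le> N}" "0 < length v - j" for v
      proof -
        have vne: "v \<noteq> []" using that by auto
        show ?thesis using that vne ball_parent[of d v N] ball_trans_parent[of d v N]
          by (intro exI[of _ "tl v"]) (auto simp: E_def)
      qed
    qed (use x jl in \<open>auto simp: j_def\<close>)
    have "k mod K + K * (k div K) = k" by simp
    then have "rw_prob E n x y \<le> c + (1 - (1 / (real d + 1)) ^ K) ^ (k div K)"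
      using h1[of k] h2 nk by simp
    then show ?thesis by (simp add: c_def E_def T_def k_def)
  qed
qed

lemma cpl_sym: "cpl r t = cpl t r"
  by (induction r t rule: cpl.induct) auto

lemma cpl_take: "take (cpl r t) r = take (cpl r t) t"
  by (induction r t rule: cpl.induct) auto

lemma cpl_ge_take: "k \<le> length r \<Longrightarrow> k \<le> length t \<Longrightarrow> take k r = take k t \<Longrightarrow> k \<le> cpl r t"
proof (induction r t arbitrary: k rule: cpl.induct)
  case (1 a r b t)
  show ?case
  proof (cases k)
    case 0 then show ?thesis by simp
  next
    case (Suc k')
    then have "a = b" "take k' r = take k' t" using "1.prems" by auto
    then show ?thesis using "1.IH"[of k'] "1.prems" Suc by auto
  qed
qed auto

lemma ball_U:
  assumes d: "d \<ge> 1" and x: "tree_vert d x" "length x \<le> N" and y: "tree_vert d y" "length y \<le> N"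
  shows "rw_prob (ball_edge d N) n x y \<le> 1 / real d ^ (length y - cpl (rev x) (rev y))"
proof -
  define m where "m = cpl (rev x) (rev y)"
  define E where "E = ball_edge d N"
  have m1: "m \<le> length x" "m \<le> length y"
    using cpl_le1[of "rev x" "rev y"] cpl_le2[of "rev x" "rev y"] by (auto simp: m_def)
  have dpos: "real d > 0" using d by simp
  have symb: "rw_prob E t v y \<le> 1 / real d ^ (length y - m)" if "length v \<le> m" for v t
  proof (cases "tree_vert d v")
    case True
    have "real d ^ (length y - m) * rw_prob E t v y \<le> Lam d N t v (length y)"
      using sym_bound[OF y(1), of m v N t] m1 that by (simp add: E_def)
    also have "\<dots> \<le> 1" by (rule Lam_le1)
    finally show ?thesis using dpos by (simp add: field_simps mult.commute)
  next
    case False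
    then have "nbrs E v = {}" using ball_nonv[of d v N] that m1 x by (simp add: E_def)
    moreover have "v \<noteq> y" using False y by auto
    ultimately have "rw_prob E t v y = 0" by (rule rw_nonv)
    then show ?thesis by simp
  qed
  show ?thesis
  proof (cases "length y = m \<or> length x = m")
    case True
    then show ?thesis
    proof
      assume "length y = m" then show ?thesis using rw_le1 by (simp add: m_def)
    next
      assume "length x = m" then show ?thesis using symb[of x n] by (simp add: E_def m_def)
    qed
  next
    case False
    then have mx: "m < length x" and my: "m < length y" using m1 by auto
    define cx where "cx = drop (length x - Suc m) x"
    have lcx: "length cx = Suc m" using mx by (simp add: cx_def)
    have rcx: "rev cx = take (Suc m) (rev x)" by (simp add: cx_def take_rev)
    show ?thesis
    proof (rule region_bound[where R="{v. length v \<le> m}" and \<Omega>="{v. \<exists>q. v = q @ cx}"])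
      show "rw_prob (ball_edge d N) t v y \<le> 1 / real d ^ (length y - cpl (rev x) (rev y))" if "v \<in> {v. length v \<le> m}" for v t
        using symb[of v t] that by (simp add: E_def m_def)
      show "y \<notin> {v. \<exists>q. v = q @ cx}"
      proof
        assume "y \<in> {v. \<exists>q. v = q @ cx}"
        then obtain q where q: "y = q @ cx" by auto
        then have "take (Suc m) (rev y) = rev cx" using lcx by simp
        then have "take (Suc m) (rev x) = take (Suc m) (rev y)" using rcx by simp
        then have "Suc m \<le> cpl (rev x) (rev y)" using mx my by (intro cpl_ge_take) auto
        then show False by (simp add: m_def)
      qed
      show "z \<in> {v. \<exists>q. v = q @ cx} \<or> z \<in> {v. length v \<le> m}"
        if vO: "v \<in> {v. \<exists>q. v = q @ cx}" and ez: "ball_edge d N v z" for v z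
      proof -
        obtain q where q: "v = q @ cx" using vO by auto
        have "(\<exists>a. v = a # z) \<or> (\<exists>a. z = a # v)" using ez by (auto simp: ball_edge_iff tree_edge_def)
        then show ?thesis
        proof
          assume "\<exists>a. z = a # v" then show ?thesis using q by (metis (mono_tags, lifting) Cons_eq_appendI mem_Collect_eq)
        next
          assume "\<exists>a. v = a # z"
          then obtain a where a: "v = a # z" by auto
          show ?thesis
          proof (cases q)
            case Nil
            then have "length z = m" using a q lcx by (metis length_Cons nat.inject self_append_conv2)
            then show ?thesis by simp
          next
            case (Cons b q')
            then have "z = q' @ cx" using a q by simp
            then show ?thesis by auto
          qed
        qed
      qed
      show "x \<in> {v. \<exists>q. v = q @ cx}" by (auto simp: cx_def intro: exI[of _ "take (length x - Suc m) x"])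
    qed simp
  qed
qed

lemma exp_fifth: "exp (1/5::real) \<le> 2"
proof -
  have "exp (1/5::real) ^ 5 = exp 1" by (simp add: exp_of_nat_mult[symmetric])
  also have "\<dots> \<le> 2 ^ 5" using exp_le by simp
  finally have a: "exp (1/5::real) ^ 5 \<le> 2 ^ 5" .
  show ?thesis
  proof (rule ccontr)
    assume "\<not> exp (1/5::real) \<le> 2"
    then have "(2::real) ^ 5 < exp (1/5) ^ 5" by (intro power_strict_mono) auto
    then show False using a by simp
  qed
qed

lemma num_bound:
  assumes d: "d \<ge> 2" and p: "p \<le> 1" "p \<le> (real d + 1) / real d ^ M" and D: "D \<le> 2 * real M"
  shows "p \<le> exp 1 * exp (- (1/10) * D)"
proof (cases "M \<le> 5")
  case True
  then have "D \<le> 10" using D by linarith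
  then have "exp (-1) \<le> exp (- (1/10) * D)" by simp
  then have "exp 1 * exp (-1) \<le> exp 1 * exp (- (1/10) * D)" by simp
  then show ?thesis using p by (simp add: exp_minus)
next
  case False
  define q where "q = real d * exp (-(1/5))"
  have q1: "q \<ge> 1" using exp_fifth d by (simp add: q_def exp_minus field_simps)
  have "q ^ 5 \<le> q ^ M" using q1 False by (intro power_increasing) auto
  moreover have "q ^ 5 = real d ^ 5 * exp (-1)"
    by (simp add: q_def power_mult_distrib exp_of_nat_mult[symmetric])
  moreover have "q ^ M = real d ^ M * exp (- (1/5) * real M)"
    by (simp add: q_def power_mult_distrib exp_of_nat_mult[symmetric] mult.commute)
  ultimately have a: "real d ^ 5 * exp (-1) \<le> real d ^ M * exp (- (1/5) * real M)" by simp
  have "real d + 1 \<le> real d ^ 5"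
  proof -
    have "real d ^ 1 \<le> real d ^ 4" using d by (intro power_increasing) auto
    then have "real d \<le> real d ^ 4" by simp
    then have "real d * 2 \<le> real d ^ 4 * real d" using d by (intro mult_mono) auto
    then show ?thesis using d by (simp add: power_Suc2[symmetric] del: power_Suc)
  qed
  also have "real d ^ 5 = exp 1 * (real d ^ 5 * exp (-1))" by (simp add: exp_minus)
  also have "\<dots> \<le> exp 1 * (real d ^ M * exp (- (1/5) * real M))" using a by simp
  finally have b: "(real d + 1) / real d ^ M \<le> exp 1 * exp (- (1/5) * real M)"
    using d by (simp add: field_simps)
  have "exp (- (1/5) * real M) \<le> exp (- (1/10) * D)" using D by simp
  then show ?thesis using p b by (smt (verit) exp_gt_zero mult_left_mono)
qed

lemma ball_case1:
  assumes d: "d \<ge> 2" and x: "tree_vert d x" "length x \<le> N" and y: "tree_vert d y" "length y \<le> N"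
  shows "rw_prob (ball_edge d N) n x y \<le> exp 1 * exp (- (1/10) * real (graph_dist (tree_edge d) x y))"
proof -
  define m where "m = cpl (rev x) (rev y)"
  define E where "E = ball_edge d N"
  define D1 where "D1 = length y - m"
  define D2 where "D2 = length x - m"
  have d1: "d \<ge> 1" using d by simp
  have m1: "m \<le> length x" "m \<le> length y"
    using cpl_le1[of "rev x" "rev y"] cpl_le2[of "rev x" "rev y"] by (auto simp: m_def)
  have dpos: "real d > 0" using d by simp
  have p1: "rw_prob E n x y \<le> (real d + 1) / real d ^ D1"
  proof -
    have "rw_prob E n x y \<le> 1 / real d ^ D1" using ball_U[OF d1 x y, of n] by (simp add: E_def D1_def m_def)
    also have "\<dots> \<le> (real d + 1) / real d ^ D1" by (intro divide_right_mono) auto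
    finally show ?thesis .
  qed
  have p2: "rw_prob E n x y \<le> (real d + 1) / real d ^ D2"
  proof (cases "D2 = 0")
    case True then show ?thesis using rw_le1[of E n x y] by simp
  next
    case False
    then have xne: "x \<noteq> []" by (auto simp: D2_def)
    have symE: "\<And>a b. E a b = E b a" by (simp add: E_def ball_edge_sym)
    have finE: "\<And>a. finite (nbrs E a)" by (simp add: E_def ball_nbrs_finite)
    have r: "rw_prob E n x y * card (nbrs E x) = rw_prob E n y x * card (nbrs E y)"
      by (rule rw_reversible[OF symE finE])
    have "tl x \<in> nbrs E x" using ball_parent[OF x xne] by (simp add: E_def nbrs_def)
    then have cx: "card (nbrs E x) \<ge> 1" using finE[of x] by (metis One_nat_def Suc_leI card_gt_0_iff empty_iff)
    have cy: "real (card (nbrs E y)) \<le> real d + 1" using ball_nbrs_card[of d N y] by (simp add: E_def)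
    have "rw_prob E n x y \<le> rw_prob E n x y * card (nbrs E x)"
      using cx rw_nonneg[of E n x y] by (simp add: mult_le_cancel_left1)
    also have "\<dots> = rw_prob E n y x * card (nbrs E y)" by (rule r)
    also have "\<dots> \<le> rw_prob E n y x * (real d + 1)" using cy rw_nonneg[of E n y x] by (intro mult_left_mono) auto
    also have "rw_prob E n y x \<le> 1 / real d ^ D2"
      using ball_U[OF d1 y x, of n] by (simp add: E_def D2_def m_def cpl_sym)
    then have "rw_prob E n y x * (real d + 1) \<le> 1 / real d ^ D2 * (real d + 1)" by (intro mult_right_mono) auto
    finally show ?thesis by simp
  qed
  define M where "M = max D1 D2"
  have pM: "rw_prob E n x y \<le> (real d + 1) / real d ^ M"
    using p1 p2 by (cases "D1 \<le> D2") (auto simp: M_def max_def)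
  have gd: "graph_dist (tree_edge d) x y \<le> D2 + D1"
  proof -
    define b where "b = drop (length x - m) x"
    have "rev (drop (length x - m) x) = take m (rev x)" by (simp add: take_rev)
    also have "\<dots> = take m (rev y)" using cpl_take[of "rev x" "rev y"] by (simp add: m_def)
    also have "\<dots> = rev (drop (length y - m) y)" by (simp add: take_rev)
    finally have bb: "drop (length y - m) y = b" by (simp add: b_def)
    have xs: "x = take (length x - m) x @ b" by (simp add: b_def)
    have ys: "y = take (length y - m) y @ b" using bb by (metis append_take_drop_id)
    have "graph_dist (tree_edge d) (take (length x - m) x @ b) (take (length y - m) y @ b)
        \<le> length (take (length x - m) x) + length (take (length y - m) y)"
      by (rule graph_dist_via) (use x y xs ys in auto)
    then show ?thesis using xs ys m1 by (simp add: D1_def D2_def)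
  qed
  have "real (graph_dist (tree_edge d) x y) \<le> 2 * real M" using gd by (simp add: M_def)
  then show ?thesis using num_bound[OF d rw_le1 pM] by (simp add: E_def)
qed

lemma geo_tail2:
  assumes d: "d \<ge> 2" and n: "n \<ge> 2" and K: "K \<ge> 1" and Kk: "K \<le> kap d n"
  shows "(1 - (1 / (real d + 1)) ^ K) ^ (m div K) \<le> exp (- (real m / ln (real n) - 1) / real n powr (99/100))"
proof -
  have n1: "n \<ge> 1" using n by simp
  define y where "y = 1 / real n powr (99/100)"
  have lnpos: "ln (real n) > 0" using n by simp
  have np: "real n powr (99/100) > 0" using n by simp
  have x: "(1 / (real d + 1)) ^ K \<ge> y"
  proof -
    have "(real d + 1) ^ K \<le> (real d + 1) ^ kap d n" using Kk by (intro power_increasing) auto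
    also have "\<dots> \<le> real n powr (99/100)" by (rule kap_pow_le[OF d n1])
    finally have le: "(real d + 1) ^ K \<le> real n powr (99/100)" .
    have "1 / real n powr (99/100) \<le> 1 / (real d + 1) ^ K"
      by (rule divide_left_mono[OF le]) (use np in auto)
    then show ?thesis unfolding y_def by (simp add: power_one_over)
  qed
  have x1: "(1 / (real d + 1)) ^ K \<le> 1" by (simp add: power_le_one)
  have y0: "0 \<le> y" by (simp add: y_def)
  have q: "real (m div K) \<ge> real m / ln (real n) - 1"
  proof -
    have mm: "m mod K < K" using K by simp
    have "real m = real (m div K * K + m mod K)" by simp
    also have "\<dots> = real (m div K) * real K + real (m mod K)" by (simp only: of_nat_add of_nat_mult)
    finally have "real m < real (m div K) * real K + real K" using mm by linarith
    then have "real m < (real (m div K) + 1) * real K" by (simp add: algebra_simps)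
    then have "real m / real K < real (m div K) + 1" using K by (subst pos_divide_less_eq) auto
    moreover have "real m / ln (real n) \<le> real m / real K"
      using kap_ln[OF d n1] Kk K lnpos by (intro divide_left_mono) auto
    ultimately show ?thesis by linarith
  qed
  have "(1 - (1 / (real d + 1)) ^ K) ^ (m div K) \<le> exp (- real (m div K) * (1 / (real d + 1)) ^ K)"
    by (rule one_minus_pow) (use x1 in auto)
  also have "\<dots> \<le> exp (- (real m / ln (real n) - 1) * y)"
  proof -
    have "(real m / ln (real n) - 1) * y \<le> real (m div K) * y" using q y0 by (intro mult_right_mono)
    also have "\<dots> \<le> real (m div K) * (1 / (real d + 1)) ^ K" using x by (intro mult_left_mono) auto
    finally have "- (real (m div K) * (1 / (real d + 1)) ^ K) \<le> - ((real m / ln (real n) - 1) * y)"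
      by linarith
    then show ?thesis by (simp only: exp_le_cancel_iff mult_minus_left)
  qed
  also have "\<dots> = exp (- (real m / ln (real n) - 1) / real n powr (99/100))" by (simp add: y_def)
  finally show ?thesis .
qed

lemma ev_tail2: "eventually (\<lambda>n::nat. exp (- (real n / (2 * ln (real n)) - 1) / real n powr (99/100)) \<le> real n powr (-3/5)) sequentially"
proof -
  have "eventually (\<lambda>x::real. exp (- (x / (2 * ln x) - 1) / x powr (99/100)) \<le> x powr (-3/5)) at_top"
    by real_asymp
  then show ?thesis by (rule ev_real_nat)
qed

lemma ev_B: "eventually (\<lambda>n::nat. (17/18) powr (real n / 2 - 1) * (3/2) powr (real n powr (1/3)) \<le> real n powr (-3/5)) sequentially"
proof -
  have "eventually (\<lambda>x::real. (17/18) powr (x/2 - 1) * (3/2) powr (x powr (1/3)) \<le> x powr (-3/5)) at_top"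
    by real_asymp
  then show ?thesis by (rule ev_real_nat)
qed

lemma ball0_nbrs: "nbrs (ball_edge d 0) x = {}"
  by (auto simp: nbrs_def ball_edge_iff tree_edge_def)

lemma part3_case2:
  assumes d: "d \<ge> 2"
  shows "\<exists>c2>0. \<forall>N n x y. tree_vert d x \<and> length x \<le> N \<and> tree_vert d y \<and> length y \<le> N \<and> n > N ^ 3 \<longrightarrow>
     rw_prob (ball_edge d N) n x y \<le> c2 * (real d powr (- real N) + real n powr (-3/5))"
proof -
  have ev: "eventually (\<lambda>n::nat. n \<ge> 2 \<and> kap d n \<ge> 1 \<and>
      exp (- (real n / (2 * ln (real n)) - 1) / real n powr (99/100)) \<le> real n powr (-3/5) \<and>
      (17/18) powr (real n / 2 - 1) * (3/2) powr (real n powr (1/3)) \<le> real n powr (-3/5)) sequentially"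
    using ev_kap[OF d, of 1] ev_tail2 ev_B eventually_ge_at_top[of "2::nat"]
    by eventually_elim auto
  then obtain n0 where n0: "\<And>n. n \<ge> n0 \<Longrightarrow> n \<ge> 2 \<and> kap d n \<ge> 1 \<and>
      exp (- (real n / (2 * ln (real n)) - 1) / real n powr (99/100)) \<le> real n powr (-3/5) \<and>
      (17/18) powr (real n / 2 - 1) * (3/2) powr (real n powr (1/3)) \<le> real n powr (-3/5)"
    by (auto simp: eventually_sequentially)
  define c2 where "c2 = 2 * (real d + 1) * real d + 2 + real n0 powr (3/5)"
  have dpos: "real d > 0" using d by simp
  have c2pos: "c2 > 0" using d by (simp add: c2_def add_pos_nonneg)
  show ?thesis
  proof (intro exI[of _ c2] conjI c2pos allI impI)
    fix N n :: nat and x y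
    assume a: "tree_vert d x \<and> length x \<le> N \<and> tree_vert d y \<and> length y \<le> N \<and> n > N ^ 3"
    have n1: "n \<ge> 1" using a by (cases n) auto
    have t1: "0 \<le> real d powr (- real N)" by simp
    have t2: "0 < real n powr (-3/5)" using n1 by simp
    show "rw_prob (ball_edge d N) n x y \<le> c2 * (real d powr (- real N) + real n powr (-3/5))"
    proof (cases "N = 0")
      case True
      then have "rw_prob (ball_edge d N) n x y = 0" using n1 ball0_nbrs[of d x] by (cases n) auto
      then show ?thesis using c2pos t1 t2 by simp
    next
      case N0: False
      show ?thesis
      proof (cases "n \<ge> n0")
        case False
        have "rw_prob (ball_edge d N) n x y \<le> 1" by (rule rw_le1)
        also have "1 \<le> real n0 powr (3/5) * real n powr (-3/5)"
        proof -
          have le: "real n powr (3/5) \<le> real n0 powr (3/5)" using False by (intro powr_mono2) auto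
          have "real n powr (3/5) * real n powr (-3/5) = real n powr (3/5 + (-3/5))" by (rule powr_add[symmetric])
          then have "1 = real n powr (3/5) * real n powr (-3/5)" using n1 by simp
          also have "\<dots> \<le> real n0 powr (3/5) * real n powr (-3/5)" using le t2 by (intro mult_right_mono) auto
          finally show ?thesis .
        qed
        also have "\<dots> \<le> c2 * (real d powr (- real N) + real n powr (-3/5))"
        proof -
          have "real n0 powr (3/5) \<le> c2" using d by (simp add: c2_def)
          then have "real n0 powr (3/5) * real n powr (-3/5) \<le> c2 * real n powr (-3/5)" using t2 by (intro mult_right_mono) auto
          also have "\<dots> \<le> c2 * (real d powr (- real N) + real n powr (-3/5))" using c2pos t1 by (intro mult_left_mono) auto
          finally show ?thesis .
        qed
        finally show ?thesis .
      next
        case True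
        note nn = n0[OF True]
        define K where "K = min N (kap d n)"
        have K1: "1 \<le> K" "K \<le> N" "K \<le> kap d n" using nn N0 by (auto simp: K_def)
        have main: "rw_prob (ball_edge d N) n x y \<le> 2 * (real d + 1) / real d ^ K + thb d ^ (n div 2) * (3/2) ^ N
           + (1 - (1 / (real d + 1)) ^ K) ^ ((n - n div 2) div K)"
          by (rule ball_case2[OF d K1(1) K1(2)]) (use a in auto)
        have A: "2 * (real d + 1) / real d ^ K \<le> 2 * (real d + 1) * real d powr (- real N) + 2 * (real d + 1) * real d * real n powr (-3/5)"
        proof (cases "K = N")
          case True
          have "real d powr (- real N) = inverse (real d powr real N)" by (rule powr_minus)
          also have "real d powr real N = real d ^ N" using dpos by (rule powr_realpow)
          finally have e: "real d powr (- real N) = inverse (real d ^ N)" .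
          have "2 * (real d + 1) / real d ^ K = 2 * (real d + 1) * real d powr (- real N)"
            unfolding e True by (simp add: divide_inverse)
          moreover have "0 \<le> 2 * (real d + 1) * real d * real n powr (-3/5)" by simp
          ultimately show ?thesis by linarith
        next
          case False
          then have Kk: "K = kap d n" by (auto simp: K_def min_def)
          have np: "real n powr (99/160) > 0" using n1 by simp
          have "real n powr (99/160) / real d \<le> real d ^ K" using kap_pow_ge[OF d n1] Kk by simp
          then have "2 * (real d + 1) / real d ^ K \<le> 2 * (real d + 1) / (real n powr (99/160) / real d)"
            by (rule divide_left_mono) (use np dpos in auto)
          also have "\<dots> = 2 * (real d + 1) * real d * inverse (real n powr (99/160))"
            using np dpos by (simp add: field_simps)
          also have "inverse (real n powr (99/160)) = real n powr (-(99/160))" by (rule powr_minus[symmetric])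
          also have "real n powr (-(99/160)) \<le> real n powr (-3/5)" using n1 by (intro powr_mono) auto
          then have "2 * (real d + 1) * real d * real n powr (-(99/160)) \<le> 2 * (real d + 1) * real d * real n powr (-3/5)"
            by (intro mult_left_mono) auto
          finally have "2 * (real d + 1) / real d ^ K \<le> 2 * (real d + 1) * real d * real n powr (-3/5)" .
          moreover have "0 \<le> 2 * (real d + 1) * real d powr (- real N)" by simp
          ultimately show ?thesis by linarith
        qed
        have B: "thb d ^ (n div 2) * (3/2) ^ N \<le> real n powr (-3/5)"
        proof -
          have th: "0 < thb d" "thb d \<le> 17/18" using thb_bounds[OF d] by auto
          have "thb d ^ (n div 2) \<le> (17/18) ^ (n div 2)" using th by (intro power_mono) auto
          also have "\<dots> = (17/18) powr real (n div 2)" by (simp add: powr_realpow)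
          also have "\<dots> \<le> (17/18) powr (real n / 2 - 1)"
          proof (rule powr_mono')
            have "real n \<le> 2 * real (n div 2) + 1" by linarith
            then show "real n / 2 - 1 \<le> real (n div 2)" by linarith
          qed auto
          finally have b1: "thb d ^ (n div 2) \<le> (17/18) powr (real n / 2 - 1)" .
          have "real N ^ 3 < real n" using a by (metis of_nat_less_iff of_nat_power)
          then have "(real N ^ 3) powr (1/3) \<le> real n powr (1/3)" by (intro powr_mono2) auto
          moreover have "(real N ^ 3) powr (1/3) = real N"
          proof (cases "N = 0")
            case True then show ?thesis by simp
          next
            case False
            then have e3: "real N powr (3::real) = real N ^ 3" using powr_realpow[of "real N" 3] by simp
            have "(real N ^ 3) powr (1/3) = (real N powr (3::real)) powr (1/3)" by (simp only: e3)
            also have "\<dots> = real N powr (3 * (1/3))" by (simp only: powr_powr)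
            also have "\<dots> = real N" by simp
            finally show ?thesis .
          qed
          ultimately have Nle: "real N \<le> real n powr (1/3)" by simp
          have "(3/2::real) ^ N = (3/2) powr real N" by (simp add: powr_realpow)
          also have "\<dots> \<le> (3/2) powr (real n powr (1/3))" using Nle by (intro powr_mono) auto
          finally have b2: "(3/2::real) ^ N \<le> (3/2) powr (real n powr (1/3))" .
          have "thb d ^ (n div 2) * (3/2) ^ N \<le> (17/18) powr (real n / 2 - 1) * (3/2) powr (real n powr (1/3))"
            using b1 b2 th by (intro mult_mono) auto
          then show ?thesis using nn by linarith
        qed
        have C: "(1 - (1 / (real d + 1)) ^ K) ^ ((n - n div 2) div K) \<le> real n powr (-3/5)"
        proof -
          have "(1 - (1 / (real d + 1)) ^ K) ^ ((n - n div 2) div K)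
              \<le> exp (- (real (n - n div 2) / ln (real n) - 1) / real n powr (99/100))"
            using nn by (intro geo_tail2[OF d _ K1(1) K1(3)]) simp
          also have "\<dots> \<le> exp (- (real n / (2 * ln (real n)) - 1) / real n powr (99/100))"
          proof -
            have lnp: "ln (real n) > 0" using nn by simp
            have "real n / 2 \<le> real (n - n div 2)" by linarith
            then have "real n / (2 * ln (real n)) \<le> real (n - n div 2) / ln (real n)"
              using lnp by (simp add: field_simps)
            then have "- (real (n - n div 2) / ln (real n) - 1) \<le> - (real n / (2 * ln (real n)) - 1)" by linarith
            then have "- (real (n - n div 2) / ln (real n) - 1) / real n powr (99/100) \<le> - (real n / (2 * ln (real n)) - 1) / real n powr (99/100)"
              using n1 by (intro divide_right_mono) auto
            then show ?thesis by (simp only: exp_le_cancel_iff)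
          qed
          finally show ?thesis using nn by linarith
        qed
        have "rw_prob (ball_edge d N) n x y \<le> 2 * (real d + 1) * real d powr (- real N) + (2 * (real d + 1) * real d + 2) * real n powr (-3/5)"
        proof -
          have "(2 * (real d + 1) * real d + 2) * real n powr (-3/5)
              = 2 * (real d + 1) * real d * real n powr (-3/5) + 2 * real n powr (-3/5)"
            by (rule distrib_right)
          then show ?thesis using main A B C by linarith
        qed
        also have "\<dots> \<le> c2 * (real d powr (- real N) + real n powr (-3/5))"
        proof -
          have n0p: "0 \<le> real n0 powr (3/5)" by simp
          have dd: "2 * (real d + 1) * 1 \<le> 2 * (real d + 1) * real d" using d by (intro mult_left_mono) auto
          have k1: "2 * (real d + 1) \<le> c2" "2 * (real d + 1) * real d + 2 \<le> c2"
            unfolding c2_def using dd n0p by linarith+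
          have "2 * (real d + 1) * real d powr (- real N) \<le> c2 * real d powr (- real N)"
            using k1(1) t1 by (rule mult_right_mono)
          moreover have "(2 * (real d + 1) * real d + 2) * real n powr (-3/5) \<le> c2 * real n powr (-3/5)"
            using k1(2) t2 by (intro mult_right_mono) auto
          ultimately show ?thesis by (simp add: distrib_left)
        qed
        finally show ?thesis .
      qed
    qed
  qed
qed

lemma part3_d:
  assumes d: "d \<ge> 2"
  shows "\<exists>c1>0. \<exists>c2>0. \<forall>N n y0 y. ball_vert d N y0 \<and> ball_vert d N y \<longrightarrow>
          rw_prob (ball_edge d N) n y0 y
            \<le> exp 1 * exp (- c1 * real (graph_dist (tree_edge d) y0 y)) * (if n \<le> N ^ 3 then 1 else 0)
              + c2 * (real d powr (- real N) + real n powr (-3/5)) * (if n > N ^ 3 then 1 else 0)"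
proof -
  obtain c2 where c2: "c2 > 0" "\<And>N n x y. tree_vert d x \<and> length x \<le> N \<and> tree_vert d y \<and> length y \<le> N \<and> n > N ^ 3 \<Longrightarrow>
     rw_prob (ball_edge d N) n x y \<le> c2 * (real d powr (- real N) + real n powr (-3/5))"
    using part3_case2[OF d] by blast
  have main: "rw_prob (ball_edge d N) n y0 y
            \<le> exp 1 * exp (- (1/10) * real (graph_dist (tree_edge d) y0 y)) * (if n \<le> N ^ 3 then 1 else 0)
              + c2 * (real d powr (- real N) + real n powr (-3/5)) * (if n > N ^ 3 then 1 else 0)"
    if a: "ball_vert d N y0 \<and> ball_vert d N y" for N n y0 y
  proof -
    from a have v: "tree_vert d y0" "length y0 \<le> N" "tree_vert d y" "length y \<le> N" by (auto simp: ball_vert_iff)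
    show ?thesis
    proof (cases "n \<le> N ^ 3")
      case True
      then show ?thesis using ball_case1[OF d v, of n] by simp
    next
      case False
      then show ?thesis using c2(2)[of y0 N y n] v by simp
    qed
  qed
  show ?thesis
    apply (rule exI[where x="1/10"], rule conjI, simp)
    apply (rule exI[where x=c2], rule conjI, rule c2(1))
    using main by blast
qed

theorem part3:
  "\<exists>c>0. \<forall>d::nat. d \<ge> 2 \<longrightarrow>
      (\<exists>c1>0. \<exists>c2>0. \<forall>N n y0 y. ball_vert d N y0 \<and> ball_vert d N y \<longrightarrow>
          rw_prob (ball_edge d N) n y0 y
            \<le> c * exp (- c1 * real (graph_dist (tree_edge d) y0 y)) * (if n \<le> N ^ 3 then 1 else 0)
              + c2 * (real d powr (- real N) + real n powr (-3/5)) * (if n > N ^ 3 then 1 else 0))"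
  apply (rule exI[where x="exp 1"], rule conjI, simp)
  using part3_d by blast

theorem lemma7p5:
  shows
   "(\<forall>d::nat. d \<ge> 2 \<longrightarrow>
      (\<exists>c>0. \<forall>n y0 y. tree_vert d y0 \<and> tree_vert d y \<longrightarrow>
          rw_prob (tree_edge d) n y0 y \<le> exp (- c * real n)))
    \<and>
    (\<forall>d::nat. d \<ge> 2 \<longrightarrow>
      (\<exists>c>0. \<exists>C C' :: nat \<Rightarrow> real. (\<forall>h. C h > 0 \<and> C' h > 0) \<and>
         (\<forall>n y0 y. n \<ge> 1 \<and> dia_vert d y0 \<and> dia_vert d y \<longrightarrow>
            rw_prob (dia_edge d) n y0 y
              \<le> real n powr (-3/5) + C (fst y) * exp (- C' (fst y) * real n powr c))))
    \<and>
    (\<exists>c>0. \<forall>d::nat. d \<ge> 2 \<longrightarrow>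
      (\<exists>c1>0. \<exists>c2>0. \<forall>N n y0 y. ball_vert d N y0 \<and> ball_vert d N y \<longrightarrow>
          rw_prob (ball_edge d N) n y0 y
            \<le> c * exp (- c1 * real (graph_dist (tree_edge d) y0 y)) * (if n \<le> N ^ 3 then 1 else 0)
              + c2 * (real d powr (- real N) + real n powr (-3/5)) * (if n > N ^ 3 then 1 else 0)))"
  proof (intro conjI)
  show "\<forall>d::nat. d \<ge> 2 \<longrightarrow>
      (\<exists>c>0. \<forall>n y0 y. tree_vert d y0 \<and> tree_vert d y \<longrightarrow>
          rw_prob (tree_edge d) n y0 y \<le> exp (- c * real n))"
    using part1 by blast
  show "\<forall>d::nat. d \<ge> 2 \<longrightarrow>
      (\<exists>c>0. \<exists>C C' :: nat \<Rightarrow> real. (\<forall>h. C h > 0 \<and> C' h > 0) \<and>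
         (\<forall>n y0 y. n \<ge> 1 \<and> dia_vert d y0 \<and> dia_vert d y \<longrightarrow>
            rw_prob (dia_edge d) n y0 y
              \<le> real n powr (-3/5) + C (fst y) * exp (- C' (fst y) * real n powr c)))"
    using part2 by blast
qed (rule part3)

end
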